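(* Let $q=p^h$ with $p$ an odd prime. In ${\rm PG}(4,q)$ with homogeneous coordinates $(X_1,\dots,X_5)$, let $\pi$ be the plane $X_4=X_5=0$, let $\ell$ be the line $X_3=X_4=X_5=0$, let $\omega$ be a primitive element of ${\rm GF}(q)$, and for $1\le i\le q+1$ let $\Pi_i$ be the solid with equation $X_4=\omega^{i-1}X_5$ if $1\le i\le q-1$, $X_4=0$ if $i=q$, and $X_5=0$ if $i=q+1$. Let $a,b,c\in{\rm GF}(q)$ be such that $X^3+aX^2+bX+c$ is irreducible over ${\rm GF}(q)$, and let $G=\{M_{r,s,t}: r,s,t\in{\rm GF}(q)\}$ where $$M_{r,s,t}=\begin{pmatrix}1&0&r&r^2-ar+s&t\\0&1&s&2rs-t&s^2+bs-cr\\0&0&1&2r&2s\\0&0&0&1&0\\0&0&0&0&1\end{pmatrix},$$ acting on ${\rm PG}(4,q)$ (points written as column vectors) by left multiplication. Then the orbits of $G$ on the lines of ${\rm PG}(4,q)$ distinct from $\ell$ are the following: (a) $q+1$ orbits of size $q$: for each point $P\in\ell$, the set of lines of $\pi$ through $P$ other than $\ell$; (b) $(q+1)^2$ orbits of size $q^2$: for each $i\in\{1,\dots,q+1\}$ and each point $P\in\ell$, the set of lines of $\Pi_i$ through $P$ not contained in $\pi$; (c) $q(q+1)$ orbits of size $q^3$: for each $i$, the lines of $\Pi_i$ that are skew to $\ell$ but meet $\pi$ in a point form $q$ orbits of size $q^3$; (d) $q^3$ orbits of size $q^3$, whose union is the set of lines disjoint from $\pi$. Moreover, each orbit of type (d)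 is a partial line spread, i.e. its lines are pairwise disjoint. *)

theory Defs
  imports "HOL-Analysis.Analysis" "HOL-Computational_Algebra.Polynomial"
          "HOL-Computational_Algebra.Factorial_Ring"
begin

text \<open>PG(4,q) over a finite field 'a: vectors are 'a^5 and a projective
  subspace of projective dimension k-1 is a (linear) subspace of dimension k.\<close>

definition coord :: "nat \<Rightarrow> 5" where
  "coord k = of_nat (k - 1)"

definition X :: "nat \<Rightarrow> 'a ^ 5 \<Rightarrow> 'a" where
  "X k v = v $ coord k"

definition idx :: "5 \<Rightarrow> nat" where
  "idx i = (THE k. k < 5 \<and> (of_nat k :: 5) = i)"

definition pg_sub :: "nat \<Rightarrow> ('a::field ^ 5) set \<Rightarrow> bool" where
  "pg_sub k U \<longleftrightarrow> vec.subspace U \<and> vec.dim U = k"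

abbreviation pg_point :: "('a::field ^ 5) set \<Rightarrow> bool" where "pg_point \<equiv> pg_sub 1"
abbreviation pg_line  :: "('a::field ^ 5) set \<Rightarrow> bool" where "pg_line \<equiv> pg_sub 2"

definition pg_lines :: "('a::field ^ 5) set set" where
  "pg_lines = {L. pg_line L}"

definition piP :: "('a::field ^ 5) set" where
  "piP = {v. X 4 v = 0 \<and> X 5 v = 0}"

definition ellL :: "('a::field ^ 5) set" where
  "ellL = {v. X 3 v = 0 \<and> X 4 v = 0 \<and> X 5 v = 0}"

definition Solid :: "'a::{field,finite} \<Rightarrow> nat \<Rightarrow> ('a ^ 5) set" where
  "Solid \<omega> i =
     (if 1 \<le> i \<and> i \<le> CARD('a) - 1 then {v. X 4 v = \<omega> ^ (i - 1) * X 5 v}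
      else if i = CARD('a) then {v. X 4 v = 0}
      else {v. X 5 v = 0})"

definition primitive_element :: "'a::{field,finite} \<Rightarrow> bool" where
  "primitive_element \<omega> \<longleftrightarrow> {\<omega> ^ k | k. True} = UNIV - {0}"

definition Mrst :: "'a::field \<Rightarrow> 'a \<Rightarrow> 'a \<Rightarrow> 'a \<Rightarrow> 'a \<Rightarrow> 'a \<Rightarrow> 'a ^ 5 ^ 5" where
  "Mrst a b c r s t =
    (\<chi> i j. [[1, 0, r, r^2 - a * r + s, t],
             [0, 1, s, 2 * r * s - t, s^2 + b * s - c * r],
             [0, 0, 1, 2 * r, 2 * s],
             [0, 0, 0, 1, 0],
             [0, 0, 0, 0, 1]] ! idx i ! idx j)"

definition act :: "'a::field ^ 5 ^ 5 \<Rightarrow> ('a ^ 5) set \<Rightarrow> ('a ^ 5) set" where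
  "act M U = (\<lambda>v. M *v v) ` U"

definition G_orbit :: "'a::field \<Rightarrow> 'a \<Rightarrow> 'a \<Rightarrow> ('a ^ 5) set \<Rightarrow> ('a ^ 5) set set" where
  "G_orbit a b c L = {act (Mrst a b c r s t) L | r s t. True}"

end

theory Submission
  imports Defs
begin

lemma exhaust_5:
  fixes x :: 5
  shows "x = 0 \<or> x = 1 \<or> x = 2 \<or> x = 3 \<or> x = 4"
proof (induct x)
  case (of_int z)
  then have "z = 0 \<or> z = 1 \<or> z = 2 \<or> z = 3 \<or> z = 4" by fastforce
  then show ?case by auto
qed

lemma UNIV_5: "(UNIV :: 5 set) = {0,1,2,3,4}"
  using exhaust_5 by auto

lemma idx_of_nat: "k < 5 \<Longrightarrow> idx (of_nat k) = k"
  unfolding idx_def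
  apply (rule the_equality)
   apply simp
  by (auto simp: less_Suc_eq numeral_eq_Suc)

lemma idx_vals: "idx 0 = 0" "idx 1 = 1" "idx 2 = 2" "idx 3 = 3" "idx 4 = 4"
  using idx_of_nat[of 0] idx_of_nat[of 1] idx_of_nat[of 2] idx_of_nat[of 3] idx_of_nat[of 4]
  by simp_all

definition mk :: "'a \<Rightarrow> 'a \<Rightarrow> 'a \<Rightarrow> 'a \<Rightarrow> 'a \<Rightarrow> 'a ^ 5" where
  "mk x1 x2 x3 x4 x5 = (\<chi> i. if i = 0 then x1 else if i = 1 then x2 else if i = 2 then x3
      else if i = 3 then x4 else x5)"

lemma mk_nth[simp]: "mk x1 x2 x3 x4 x5 $ 0 = x1" "mk x1 x2 x3 x4 x5 $ 1 = x2"
  "mk x1 x2 x3 x4 x5 $ 2 = x3" "mk x1 x2 x3 x4 x5 $ 3 = x4" "mk x1 x2 x3 x4 x5 $ 4 = x5"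
  by (simp_all add: mk_def)

lemma vec5_eq: fixes v w :: "'a^5" shows "v = w \<longleftrightarrow> v$0 = w$0 \<and> v$1 = w$1 \<and> v$2 = w$2 \<and> v$3 = w$3 \<and> v$4 = w$4"
proof
  assume h: "v$0 = w$0 \<and> v$1 = w$1 \<and> v$2 = w$2 \<and> v$3 = w$3 \<and> v$4 = w$4"
  show "v = w" unfolding vec_eq_iff
  proof
    fix i :: 5 show "v$i = w$i" using exhaust_5[of i] h by auto
  qed
qed simp

lemma mk_eq[simp]: "mk x1 x2 x3 x4 x5 = mk y1 y2 y3 y4 y5 \<longleftrightarrow>
   x1 = y1 \<and> x2 = y2 \<and> x3 = y3 \<and> x4 = y4 \<and> x5 = y5"
  by (simp add: vec5_eq)

lemma mk_eta: fixes v :: "'a^5" shows "v = mk (v$0) (v$1) (v$2) (v$3) (v$4)"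
  by (simp add: vec5_eq)

lemma mk_add[simp]: "mk x1 x2 x3 x4 x5 + mk y1 y2 y3 y4 y5 = mk (x1+y1) (x2+y2) (x3+y3) (x4+y4) (x5+y5)"
  by (simp add: vec5_eq)
lemma mk_diff[simp]: "mk x1 x2 x3 x4 x5 - mk y1 y2 y3 y4 y5 = mk (x1-y1) (x2-y2) (x3-y3) (x4-y4) (x5-y5)"
  by (simp add: vec5_eq)
lemma mk_smult[simp]: "(c::'a::times) *s mk x1 x2 x3 x4 x5 = mk (c*x1) (c*x2) (c*x3) (c*x4) (c*x5)"
  by (simp add: vec5_eq)
lemma mk_zero: "(0::'a::zero^5) = mk 0 0 0 0 0"
  by (simp add: vec5_eq)
lemma mk_zero_iff[simp]: "mk x1 x2 x3 x4 x5 = (0::'a::zero^5) \<longleftrightarrow> x1 = 0 \<and> x2 = 0 \<and> x3 = 0 \<and> x4 = 0 \<and> x5 = 0"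
  by (simp add: vec5_eq)

lemma X_simps[simp]: fixes v :: "'a^5" shows "X 1 v = v$0" "X 2 v = v$1" "X 3 v = v$2" "X 4 v = v$3" "X 5 v = v$4"
  by (simp_all add: X_def coord_def)

lemma piP_def': "piP = {v. v$3 = 0 \<and> v$4 = 0}" by (simp add: piP_def)
lemma ellL_def': "ellL = {v. v$2 = 0 \<and> v$3 = 0 \<and> v$4 = 0}" by (simp add: ellL_def)

definition gm :: "'a::field \<Rightarrow> 'a \<Rightarrow> 'a \<Rightarrow> 'a \<Rightarrow> 'a \<Rightarrow> 'a \<Rightarrow> 'a^5 \<Rightarrow> 'a^5" where
  "gm a b c r s t v = mk (v$0 + r * v$2 + (r^2 - a * r + s) * v$3 + t * v$4)
      (v$1 + s * v$2 + (2 * r * s - t) * v$3 + (s^2 + b * s - c * r) * v$4)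
      (v$2 + 2 * r * v$3 + 2 * s * v$4) (v$3) (v$4)"

lemma sum5: "sum f (UNIV::5 set) = f 0 + f 1 + f 2 + f 3 + f 4"
  unfolding UNIV_5 by (simp add: add.assoc)
lemma Mentries: "Mrst a b c r s t $ i $ j = [[1, 0, r, r^2 - a * r + s, t],
             [0, 1, s, 2 * r * s - t, s^2 + b * s - c * r],
             [0, 0, 1, 2 * r, 2 * s],
             [0, 0, 0, 1, 0],
             [0, 0, 0, 0, 1]] ! idx i ! idx j"
  by (simp add: Mrst_def)
lemma Mv: "Mrst a b c r s t *v v = gm a b c r s t v"
  unfolding gm_def vec5_eq
  apply (simp only: matrix_vector_mult_def vec_lambda_beta sum5 Mentries idx_vals mk_nth)
  apply (simp add: algebra_simps)
  done

lemma act_gm: "act (Mrst a b c r s t) L = gm a b c r s t ` L"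
  by (simp add: act_def Mv)

definition lin :: "'a::field^5 \<Rightarrow> 'a^5 \<Rightarrow> ('a^5) set" where
  "lin u v = {\<alpha> *s u + \<beta> *s v | \<alpha> \<beta>. True}"
definition lin1 :: "'a::field^5 \<Rightarrow> ('a^5) set" where
  "lin1 p = {\<alpha> *s p | \<alpha>. True}"
definition ind :: "'a::field^5 \<Rightarrow> 'a^5 \<Rightarrow> bool" where
  "ind u v \<longleftrightarrow> (\<forall>\<alpha> \<beta>. \<alpha> *s u + \<beta> *s v = 0 \<longrightarrow> \<alpha> = 0 \<and> \<beta> = 0)"

lemma span_lin1: "vec.span {p} = lin1 p"
  by (auto simp: vec.span_singleton lin1_def)

lemma span_lin: "vec.span {u,v} = lin u v"
  unfolding vec.span_insert[of u "{v}"] vec.span_singleton lin_def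
proof (auto)
  fix x k \<beta> assume "x - k *s u = \<beta> *s v"
  then have "x = k *s u + \<beta> *s v" by (metis diff_add_cancel add.commute)
  then show "\<exists>\<alpha> \<beta>. x = \<alpha> *s u + \<beta> *s v" by blast
next
  fix \<alpha> \<beta>
  show "\<exists>k. \<alpha> *s u + \<beta> *s v - k *s u \<in> range (\<lambda>k. k *s v)"
    by (rule exI[of _ \<alpha>]) auto
qed

lemma smult_solve:
  fixes u v :: "'a::field^5"
  assumes "\<alpha> *s u + \<beta> *s v = 0" "\<alpha> \<noteq> 0"
  shows "u = (- \<beta> / \<alpha>) *s v"
proof -
  have "\<forall>i. \<alpha> * u$i + \<beta> * v$i = 0" using assms(1) by (metis vec_eq_iff vector_add_component vector_smult_component zero_index)
  then show ?thesis using assms(2) unfolding vec_eq_iff by (auto simp: field_simps add_eq_0_iff)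
qed

lemma indep_ind:
  assumes "u \<noteq> v" "vec.independent {u,v}"
  shows "ind u v"
proof -
  have v0: "v \<noteq> 0" and us: "u \<notin> vec.span {v}"
    using assms vec.independent_insert[of u "{v}"] by auto
  show ?thesis unfolding ind_def
  proof (intro allI impI)
    fix \<alpha> \<beta> assume h: "\<alpha> *s u + \<beta> *s v = 0"
    have a0: "\<alpha> = 0"
    proof (rule ccontr)
      assume "\<alpha> \<noteq> 0"
      then have "u = (- \<beta> / \<alpha>) *s v" using smult_solve h by blast
      then have "u \<in> range (\<lambda>k. k *s v)" by blast
      then have "u \<in> vec.span {v}" by (simp add: vec.span_singleton)
      with us show False by simp
    qed
    then have "\<beta> *s v = 0" using h by simp
    then show "\<alpha> = 0 \<and> \<beta> = 0" using a0 v0 by simp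
  qed
qed

lemma ind_indep:
  assumes "ind u v"
  shows "u \<noteq> v" "vec.independent {u,v}"
proof -
  show uv: "u \<noteq> v"
  proof
    assume "u = v"
    then have "1 *s u + (-1) *s v = 0" by (simp add: vector_smult_lneg)
    then show False using assms[unfolded ind_def, rule_format, of 1 "-1"] by simp
  qed
  have v0: "v \<noteq> 0"
  proof
    assume "v = 0" then have "0 *s u + 1 *s v = 0" by simp
    then show False using assms[unfolded ind_def, rule_format, of 0 1] by simp
  qed
  have us: "u \<notin> vec.span {v}"
  proof
    assume "u \<in> vec.span {v}"
    then obtain k where "u = k *s v" by (auto simp: vec.span_singleton)
    then have "1 *s u + (-k) *s v = 0" by (simp add: vector_smult_lneg)
    then show False using assms[unfolded ind_def, rule_format, of 1 "-k"] by simp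
  qed
  show "vec.independent {u,v}"
    using uv v0 us vec.independent_insert[of u "{v}"] by auto
qed

lemma line_ln: "ind u v \<Longrightarrow> pg_line (lin u v)"
  unfolding pg_sub_def span_lin[symmetric]
  using ind_indep[of u v] by (simp add: vec.dim_eq_card_independent)

lemma point_ln1: "p \<noteq> 0 \<Longrightarrow> pg_point (lin1 p)"
  unfolding pg_sub_def span_lin1[symmetric]
  by (simp add: vec.dim_eq_card_independent)

lemma line_eq:
  assumes "pg_line L" "ind u v" "u \<in> L" "v \<in> L"
  shows "L = lin u v"
proof -
  have sL: "vec.subspace L" and dL: "vec.dim L = 2" using assms(1) by (auto simp: pg_sub_def)
  have sub: "lin u v \<subseteq> L" unfolding span_lin[symmetric]
    using vec.span_minimal[of "{u,v}" L] sL assms by auto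
  have "pg_line (lin u v)" using line_ln assms(2) .
  then have "vec.subspace (lin u v)" "vec.dim (lin u v) = 2" by (auto simp: pg_sub_def)
  then show ?thesis using vec.subspace_dim_equal[OF _ sL sub] dL by simp
qed

lemma line_iff: "pg_line L \<longleftrightarrow> (\<exists>u v. ind u v \<and> L = lin u v)"
proof
  assume h: "pg_line L"
  then have sL: "vec.subspace L" and dL: "vec.dim L = 2" by (auto simp: pg_sub_def)
  obtain B where B: "B \<subseteq> L" "vec.independent B" "L \<subseteq> vec.span B" "card B = vec.dim L"
    using vec.basis_exists by blast
  then obtain u v where uv: "B = {u,v}" "u \<noteq> v" using dL card_2_iff by metis
  have "vec.span B \<subseteq> L" using vec.span_minimal B(1) sL by blast
  then have "L = lin u v" using B(3) uv span_lin by blast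
  moreover have "ind u v" using indep_ind uv B(2) by blast
  ultimately show "\<exists>u v. ind u v \<and> L = lin u v" by blast
next
  assume "\<exists>u v. ind u v \<and> L = lin u v"
  then show "pg_line L" using line_ln by blast
qed

lemma point_iff: "pg_point P \<longleftrightarrow> (\<exists>p. p \<noteq> 0 \<and> P = lin1 p)"
proof
  assume h: "pg_point P"
  then have sL: "vec.subspace P" and dL: "vec.dim P = 1" by (auto simp: pg_sub_def)
  obtain B where B: "B \<subseteq> P" "vec.independent B" "P \<subseteq> vec.span B" "card B = vec.dim P"
    using vec.basis_exists by blast
  then obtain p where p: "B = {p}" using dL card_1_singletonE by metis
  have "vec.span B \<subseteq> P" using vec.span_minimal B(1) sL by blast
  then have "P = lin1 p" using B(3) p span_lin1 by blast
  moreover have "p \<noteq> 0" using B(2) p by auto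
  ultimately show "\<exists>p. p \<noteq> 0 \<and> P = lin1 p" by blast
next
  assume "\<exists>p. p \<noteq> 0 \<and> P = lin1 p"
  then show "pg_point P" using point_ln1 by blast
qed

lemma in_lin: "x \<in> lin u v \<longleftrightarrow> (\<exists>\<alpha> \<beta>. x = \<alpha> *s u + \<beta> *s v)"
  by (auto simp: lin_def)
lemma in_lin1: "x \<in> lin1 p \<longleftrightarrow> (\<exists>\<alpha>. x = \<alpha> *s p)"
  by (auto simp: lin1_def)
lemma lin_mem[simp]: "u \<in> lin u v" "v \<in> lin u v" "0 \<in> lin u v"
  unfolding in_lin
    apply (rule exI[of _ 1], rule exI[of _ 0], simp)
   apply (rule exI[of _ 0], rule exI[of _ 1], simp)
  apply (rule exI[of _ 0], rule exI[of _ 0], simp)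
  done
lemma lin1_mem[simp]: "p \<in> lin1 p" "0 \<in> lin1 p"
  unfolding in_lin1
   apply (rule exI[of _ 1], simp)
  apply (rule exI[of _ 0], simp)
  done

lemma line_not_point: "pg_line L \<Longrightarrow> \<not> pg_point L"
  by (simp add: pg_sub_def)

lemma gm_lin: "gm a b c r s t (\<alpha> *s u + \<beta> *s v) = \<alpha> *s gm a b c r s t u + \<beta> *s gm a b c r s t v"
  unfolding gm_def vec5_eq by (simp add: algebra_simps)

lemma gm_comp: "gm a b c r s t (gm a b c r' s' t' v) = gm a b c (r+r') (s+s') (t+t'+2*r * s') v"
  unfolding gm_def vec5_eq by (simp add: algebra_simps power2_eq_square)

lemma gm_id: "gm a b c 0 0 0 v = v"
  unfolding gm_def vec5_eq by simp

lemma lin_range: "lin u v = range (\<lambda>(\<alpha>,\<beta>). \<alpha> *s u + \<beta> *s v)"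
  by (auto simp: lin_def)
lemma lin1_range: "lin1 u = range (\<lambda>\<alpha>. \<alpha> *s u)"
  by (auto simp: lin1_def)

lemma gm_img_lin: "gm a b c r s t ` lin u v = lin (gm a b c r s t u) (gm a b c r s t v)"
  unfolding lin_range image_image by (simp add: gm_lin case_prod_beta')

lemma gm_img_lin1: "gm a b c r s t ` lin1 u = lin1 (gm a b c r s t u)"
proof -
  have "gm a b c r s t (\<alpha> *s u) = \<alpha> *s gm a b c r s t u" for \<alpha>
    using gm_lin[of a b c r s t \<alpha> u 0 0] by simp
  then show ?thesis unfolding lin1_range image_image by simp
qed

lemma gm_zero_iff: "gm a b c r s t x = 0 \<longleftrightarrow> x = 0"
proof
  assume h: "gm a b c r s t x = 0"
  have h3: "x$3 = 0" using arg_cong[OF h, of "\<lambda>v. v$3"] by (simp add: gm_def)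
  have h4: "x$4 = 0" using arg_cong[OF h, of "\<lambda>v. v$4"] by (simp add: gm_def)
  have h2: "x$2 = 0" using arg_cong[OF h, of "\<lambda>v. v$2"] h3 h4 by (simp add: gm_def)
  have h0: "x$0 = 0" using arg_cong[OF h, of "\<lambda>v. v$0"] h2 h3 h4 by (simp add: gm_def)
  have h1: "x$1 = 0" using arg_cong[OF h, of "\<lambda>v. v$1"] h2 h3 h4 by (simp add: gm_def)
  show "x = 0" using h0 h1 h2 h3 h4 unfolding vec5_eq by simp
qed (simp add: gm_def vec5_eq)

lemma gm_ind: "ind u v \<Longrightarrow> ind (gm a b c r s t u) (gm a b c r s t v)"
  unfolding ind_def by (metis gm_lin gm_zero_iff)

lemma gm_img_comp: "gm a b c r s t ` gm a b c r' s' t' ` L = gm a b c (r+r') (s+s') (t+t'+2*r * s') ` L"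
  by (simp add: image_image gm_comp)

lemma G_orbit_gm: "G_orbit a b c L = {gm a b c r s t ` L | r s t. True}"
  by (simp add: G_orbit_def act_gm)

lemma orbit_self: "L \<in> G_orbit a b c L"
  unfolding G_orbit_gm by (rule CollectI, rule exI[of _ 0], rule exI[of _ 0], rule exI[of _ 0]) (simp add: gm_id)

lemma orbit_act: "G_orbit a b c (gm a b c r s t ` L) = G_orbit a b c L"
proof -
  have 1: "gm a b c r' s' t' ` gm a b c r s t ` L \<in> G_orbit a b c L" for r' s' t'
    unfolding gm_img_comp G_orbit_gm by blast
  have 2: "gm a b c r' s' t' ` L \<in> G_orbit a b c (gm a b c r s t ` L)" for r' s' t'
  proof -
    have "gm a b c r' s' t' ` L = gm a b c (r'-r) (s'-s) (t' - t - 2*(r'-r) * s) ` gm a b c r s t ` L"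
      unfolding gm_img_comp by simp
    then show ?thesis unfolding G_orbit_gm by blast
  qed
  show ?thesis using 1 2 unfolding G_orbit_gm[of _ _ _ L] G_orbit_gm[of _ _ _ "gm a b c r s t ` L"]
    by blast
qed

lemma orbit_mem_eq: "L' \<in> G_orbit a b c L \<Longrightarrow> G_orbit a b c L' = G_orbit a b c L"
proof -
  assume "L' \<in> G_orbit a b c L"
  then obtain r s t where "L' = gm a b c r s t ` L" unfolding G_orbit_gm by blast
  then show ?thesis using orbit_act by simp
qed

lemma lin_comb_mem: "x \<in> lin u v \<Longrightarrow> y \<in> lin u v \<Longrightarrow> \<alpha> *s x + \<beta> *s y \<in> lin u v"
proof -
  assume "x \<in> lin u v" "y \<in> lin u v"
  then obtain a1 b1 a2 b2 where "x = a1 *s u + b1 *s v" "y = a2 *s u + b2 *s v" unfolding in_lin by blast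
  then have "\<alpha> *s x + \<beta> *s y = (\<alpha>*a1 + \<beta>*a2) *s u + (\<alpha>*b1+\<beta>*b2) *s v"
    unfolding vec5_eq by (simp add: algebra_simps)
  then show ?thesis unfolding in_lin by blast
qed

lemma lin_shift: "lin u (w + k *s u) = lin u w"
proof -
  have "\<alpha> *s u + \<beta> *s (w + k *s u) = (\<alpha> + \<beta>*k) *s u + \<beta> *s w" for \<alpha> \<beta>
    unfolding vec5_eq by (simp add: algebra_simps)
  moreover have "\<alpha> *s u + \<beta> *s w = (\<alpha> - \<beta>*k) *s u + \<beta> *s (w + k *s u)" for \<alpha> \<beta>
    unfolding vec5_eq by (simp add: algebra_simps)
  ultimately show ?thesis unfolding lin_def by blast
qed

lemma ind_minor:
  assumes "x$i * y$j - x$j * y$i \<noteq> 0"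
  shows "ind x y"
  unfolding ind_def
proof (intro allI impI)
  fix \<alpha> \<beta> assume h: "\<alpha> *s x + \<beta> *s y = 0"
  then have hi: "\<alpha> * x$i + \<beta> * y$i = 0" and hj: "\<alpha> * x$j + \<beta> * y$j = 0"
    by (metis vector_add_component vector_smult_component zero_index)+
  have "\<alpha> * (x$i * y$j - x$j * y$i) = y$j * (\<alpha> * x$i + \<beta> * y$i) - y$i * (\<alpha> * x$j + \<beta> * y$j)"
    by (simp add: algebra_simps)
  then have a: "\<alpha> = 0" using hi hj assms by simp
  have "\<beta> * (x$i * y$j - x$j * y$i) = x$i * (\<alpha> * x$j + \<beta> * y$j) - x$j * (\<alpha> * x$i + \<beta> * y$i)"
    by (simp add: algebra_simps)
  then have "\<beta> = 0" using hi hj assms by simp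
  with a show "\<alpha> = 0 \<and> \<beta> = 0" by simp
qed

lemma lin_comp: "x = \<alpha> *s u + \<beta> *s v \<Longrightarrow> x$i = \<alpha> * u$i + \<beta> * v$i"
  by simp

definition LD :: "'a::field \<Rightarrow> 'a \<Rightarrow> 'a \<Rightarrow> 'a \<Rightarrow> 'a \<Rightarrow> 'a \<Rightarrow> ('a^5) set" where
  "LD x1 x2 x3 y1 y2 y3 = lin (mk x1 x2 x3 1 0) (mk y1 y2 y3 0 1)"

definition Dset :: "('a::field^5) set set" where
  "Dset = {L. pg_line L \<and> L \<inter> piP = {0}}"

lemma LD_ind: "ind (mk x1 x2 x3 1 0) (mk y1 y2 y3 0 (1::'a::field))"
  by (rule ind_minor[of _ 3 _ 4]) simp

lemma LD_line: "pg_line (LD x1 x2 x3 y1 y2 y3)"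
  unfolding LD_def by (rule line_ln[OF LD_ind])

lemma LD_Dset: "LD x1 x2 x3 y1 y2 y3 \<in> Dset"
proof -
  have "LD x1 x2 x3 y1 y2 y3 \<inter> piP \<subseteq> {0}"
  proof
    fix x assume "x \<in> LD x1 x2 x3 y1 y2 y3 \<inter> piP"
    then have "x \<in> lin (mk x1 x2 x3 1 0) (mk y1 y2 y3 0 1)" "x$3 = 0" "x$4 = 0"
      unfolding LD_def piP_def' by auto
    then obtain \<alpha> \<beta> where "x = \<alpha> *s mk x1 x2 x3 1 0 + \<beta> *s mk y1 y2 y3 0 1" "x$3 = 0" "x$4 = 0"
      unfolding in_lin by blast
    then show "x \<in> {0}" by (simp add: vec5_eq)
  qed
  moreover have "0 \<in> LD x1 x2 x3 y1 y2 y3 \<inter> piP" by (simp add: LD_def piP_def')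
  ultimately show ?thesis unfolding Dset_def using LD_line by blast
qed

lemma LD_eq:
  assumes "LD x1 x2 x3 y1 y2 y3 = LD x1' x2' x3' y1' y2' y3'"
  shows "x1 = x1' \<and> x2 = x2' \<and> x3 = x3' \<and> y1 = y1' \<and> y2 = y2' \<and> y3 = y3'"
proof -
  have "mk x1 x2 x3 1 0 \<in> LD x1' x2' x3' y1' y2' y3'" "mk y1 y2 y3 0 1 \<in> LD x1' x2' x3' y1' y2' y3'"
    using assms unfolding LD_def by (metis lin_mem(1), metis lin_mem(2))
  then obtain \<alpha> \<beta> \<gamma> \<delta> where
    "mk x1 x2 x3 1 0 = \<alpha> *s mk x1' x2' x3' 1 0 + \<beta> *s mk y1' y2' y3' 0 1"
    "mk y1 y2 y3 0 1 = \<gamma> *s mk x1' x2' x3' 1 0 + \<delta> *s mk y1' y2' y3' 0 1"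
    unfolding LD_def in_lin by blast
  then show ?thesis by simp
qed

lemma ind_nonzero: "ind u v \<Longrightarrow> (\<alpha>, \<beta>) \<noteq> (0,0) \<Longrightarrow> \<alpha> *s u + \<beta> *s v \<noteq> 0"
  unfolding ind_def by auto

lemma D_char:
  assumes "L \<in> Dset"
  shows "\<exists>x1 x2 x3 y1 y2 y3. L = LD x1 x2 x3 y1 y2 y3"
proof -
  from assms have lL: "pg_line L" and Lp: "L \<inter> piP = {0}" unfolding Dset_def by auto
  obtain u v where uv: "ind u v" "L = lin u v" using lL unfolding line_iff by blast
  define d where "d = u$3 * v$4 - u$4 * v$3"
  have nz: "w \<in> L \<Longrightarrow> w$3 = 0 \<Longrightarrow> w$4 = 0 \<Longrightarrow> w = 0" for w
  proof -
    assume "w \<in> L" "w$3 = 0" "w$4 = 0"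
    then have "w \<in> L \<inter> piP" unfolding piP_def' by simp
    then show "w = 0" using Lp by simp
  qed
  have d0: "d \<noteq> 0"
  proof
    assume d: "d = 0"
    show False
    proof (cases "u$4 \<noteq> 0 \<or> v$4 \<noteq> 0")
      case True
      let ?w = "v$4 *s u + (- u$4) *s v"
      have "?w \<in> L" unfolding uv(2) in_lin by blast
      moreover have "?w$3 = 0" using d by (simp add: d_def algebra_simps)
      moreover have "?w$4 = 0" by (simp add: algebra_simps)
      moreover have "?w \<noteq> 0" by (rule ind_nonzero[OF uv(1)]) (use True in auto)
      ultimately show False using nz by blast
    next
      case False
      show False
      proof (cases "u$3 \<noteq> 0 \<or> v$3 \<noteq> 0")
        case True
        let ?w = "v$3 *s u + (- u$3) *s v"
        have "?w \<in> L" unfolding uv(2) in_lin by blast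
        moreover have "?w$3 = 0" by (simp add: algebra_simps)
        moreover have "?w$4 = 0" using False by simp
        moreover have "?w \<noteq> 0" by (rule ind_nonzero[OF uv(1)]) (use True in auto)
        ultimately show False using nz by blast
      next
        case F2: False
        have "u \<noteq> 0" using ind_nonzero[OF uv(1), of 1 0] by simp
        moreover have "u \<in> L" using uv by simp
        ultimately show False using nz False F2 by blast
      qed
    qed
  qed
  define u' where "u' = (v$4 / d) *s u + (- u$4 / d) *s v"
  define v' where "v' = (- v$3 / d) *s u + (u$3 / d) *s v"
  have u'3: "u'$3 = 1" 
  proof -
    have "u'$3 = (u$3 * v$4 - u$4 * v$3) / d" unfolding u'_def by (simp add: diff_divide_distrib mult.commute)
    then show ?thesis using d0 by (simp add: d_def)
  qed
  have v'4: "v'$4 = 1" 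
  proof -
    have "v'$4 = (u$3 * v$4 - u$4 * v$3) / d" unfolding v'_def by (simp add: diff_divide_distrib mult.commute)
    then show ?thesis using d0 by (simp add: d_def)
  qed
  have u'4: "u'$4 = 0" unfolding u'_def by (simp add: mult.commute)
  have v'3: "v'$3 = 0" unfolding v'_def by (simp add: mult.commute)
  have inL: "u' \<in> L" "v' \<in> L" unfolding uv(2) u'_def v'_def in_lin by blast+
  have "ind u' v'" by (rule ind_minor[of _ 3 _ 4]) (simp add: u'3 u'4 v'3 v'4)
  then have "L = lin u' v'" using line_eq[OF lL _ inL] by simp
  also have "\<dots> = LD (u'$0) (u'$1) (u'$2) (v'$0) (v'$1) (v'$2)"
  proof -
    have "u' = mk (u'$0) (u'$1) (u'$2) 1 0" "v' = mk (v'$0) (v'$1) (v'$2) 0 1"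
      using u'3 u'4 v'3 v'4 by (simp_all add: vec5_eq)
    then show ?thesis unfolding LD_def by (rule arg_cong2)
  qed
  finally show ?thesis by blast
qed

lemma gm_LD: "gm a b c r s t ` LD x1 x2 x3 y1 y2 y3 = LD (x1 + r * x3 + (r^2 - a * r + s))
   (x2 + s * x3 + (2 * r * s - t)) (x3 + 2 * r) (y1 + r * y3 + t) (y2 + s * y3 + (s^2 + b * s - c * r)) (y3 + 2 * s)"
  unfolding LD_def gm_img_lin by (simp add: gm_def)

lemma orbit_LD: "G_orbit a b c (LD x1 x2 x3 y1 y2 y3) = {LD (x1 + r * x3 + (r^2 - a * r + s))
   (x2 + s * x3 + (2 * r * s - t)) (x3 + 2 * r) (y1 + r * y3 + t) (y2 + s * y3 + (s^2 + b * s - c * r)) (y3 + 2 * s) | r s t. True}"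
  unfolding G_orbit_gm gm_LD by simp

lemma lin_diff: fixes \<alpha> :: "'a::field" shows "\<alpha> * x + \<beta> * y = \<alpha> * (x + A) + \<beta> * (y + B) \<Longrightarrow> \<alpha> * A + \<beta> * B = 0"
  by (simp add: distrib_left add_ac)

locale ctx =
  fixes a b c :: "'a::{field,finite}"
  assumes two: "(2::'a) \<noteq> 0"
    and cub: "\<And>x y. x^3 + a * x^2 * y + b * x * y^2 + c * y^3 = 0 \<Longrightarrow> x = 0 \<and> y = 0"
begin

lemma spread_alg:
  fixes \<alpha> \<beta> r s t x3 y3 :: 'a
  assumes nz: "\<not> (r = 0 \<and> s = 0 \<and> t = 0)"
    and E0: "\<alpha> * (r * x3 + (r^2 - a * r + s)) + \<beta> * (r * y3 + t) = 0"
    and E1: "\<alpha> * (s * x3 + (2 * r * s - t)) + \<beta> * (s * y3 + (s^2 + b * s - c * r)) = 0"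
    and E2: "\<alpha> * (2 * r) + \<beta> * (2 * s) = 0"
  shows "\<alpha> = 0 \<and> \<beta> = 0"
proof -
  have "2 * (\<alpha> * r + \<beta> * s) = 0" using E2 by (simp add: algebra_simps)
  then have h: "\<alpha> * r + \<beta> * s = 0" using two by (metis mult_eq_0_iff)
  show ?thesis
  proof (cases "r = 0 \<and> s = 0")
    case True
    then have t: "t \<noteq> 0" using nz by simp
    from E0 True have "\<beta> * t = 0" by simp
    then have b0: "\<beta> = 0" using t by simp
    from E1 True have "\<alpha> * t = 0" by simp
    then have "\<alpha> = 0" using t by simp
    with b0 show ?thesis by simp
  next
    case False
    show ?thesis
    proof (rule ccontr)
      assume ab: "\<not> (\<alpha> = 0 \<and> \<beta> = 0)"
      obtain l where rl: "r = l * \<beta>" and sl: "s = - l * \<alpha>"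
      proof (cases "\<beta> = 0")
        case True
        then have a0: "\<alpha> \<noteq> 0" using ab by simp
        then have "r = 0" using h True by simp
        show ?thesis by (rule that[of "- s / \<alpha>"]) (use a0 True \<open>r = 0\<close> in auto)
      next
        case False
        have se: "s = - (r / \<beta>) * \<alpha>" using h False by (simp add: field_simps) (metis add.commute add_eq_0_iff mult.commute)
        have re: "r = (r / \<beta>) * \<beta>" using False by simp
        show ?thesis using that[OF re se] .
      qed
      have l0: "l \<noteq> 0" using False rl sl by auto
      have key: "\<alpha> * (r * x3 + (r^2 - a * r + s)) + \<beta> * (r * y3 + t) = 0 \<Longrightarrow>
          \<alpha> * (s * x3 + (2 * r * s - t)) + \<beta> * (s * y3 + (s^2 + b * s - c * r)) = 0 \<Longrightarrow>
          l * (\<alpha>^3 + a * \<alpha>^2 * \<beta> + b * \<alpha> * \<beta>^2 + c * \<beta>^3) = 0"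
        unfolding rl sl by algebra
      have "\<alpha>^3 + a * \<alpha>^2 * \<beta> + b * \<alpha> * \<beta>^2 + c * \<beta>^3 = 0" using key[OF E0 E1] l0 by simp
      then show False using cub ab by blast
    qed
  qed
qed

abbreviation "Orb \<equiv> G_orbit a b c"

lemma orbit_LD_img: "Orb (LD x1 x2 x3 y1 y2 y3) = (\<lambda>(r,s,t). LD (x1 + r * x3 + (r^2 - a * r + s))
   (x2 + s * x3 + (2 * r * s - t)) (x3 + 2 * r) (y1 + r * y3 + t) (y2 + s * y3 + (s^2 + b * s - c * r)) (y3 + 2 * s)) ` UNIV"
  unfolding orbit_LD by auto

lemma card_UNIV3: "card (UNIV :: ('a \<times> 'a \<times> 'a) set) = CARD('a)^3"
  by (simp add: UNIV_Times_UNIV[symmetric] card_cartesian_product del: UNIV_Times_UNIV) (simp add: power3_eq_cube)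

lemma D_orbit_card: "card (Orb (LD x1 x2 x3 y1 y2 y3)) = CARD('a)^3"
proof -
  have "inj (\<lambda>(r,s,t). LD (x1 + r * x3 + (r^2 - a * r + s))
   (x2 + s * x3 + (2 * r * s - t)) (x3 + 2 * r) (y1 + r * y3 + t) (y2 + s * y3 + (s^2 + b * s - c * r)) (y3 + 2 * s))"
  proof (rule injI, clarsimp)
    fix r s t r' s' t' :: 'a
    assume "LD (x1 + r * x3 + (r^2 - a * r + s))
   (x2 + s * x3 + (2 * r * s - t)) (x3 + 2 * r) (y1 + r * y3 + t) (y2 + s * y3 + (s^2 + b * s - c * r)) (y3 + 2 * s) =
     LD (x1 + r' * x3 + (r'^2 - a * r' + s'))
   (x2 + s' * x3 + (2 * r' * s' - t')) (x3 + 2 * r') (y1 + r' * y3 + t') (y2 + s' * y3 + (s'^2 + b * s' - c * r')) (y3 + 2 * s')"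
    from LD_eq[OF this] have e: "x3 + 2 * r = x3 + 2 * r'" "y3 + 2 * s = y3 + 2 * s'" "y1 + r * y3 + t = y1 + r' * y3 + t'"
      by simp_all
    then have "r = r'" "s = s'" using two by simp_all
    with e show "r = r' \<and> s = s' \<and> t = t'" by simp
  qed
  then show ?thesis unfolding orbit_LD_img by (simp add: card_image card_UNIV3 power3_eq_cube)
qed

lemma D_orbit_sub: "L \<in> Dset \<Longrightarrow> Orb L \<subseteq> Dset"
proof -
  assume "L \<in> Dset"
  then obtain x1 x2 x3 y1 y2 y3 where "L = LD x1 x2 x3 y1 y2 y3" using D_char by blast
  then have "Orb L = (\<lambda>(r,s,t). LD (x1 + r * x3 + (r^2 - a * r + s))
   (x2 + s * x3 + (2 * r * s - t)) (x3 + 2 * r) (y1 + r * y3 + t) (y2 + s * y3 + (s^2 + b * s - c * r)) (y3 + 2 * s)) ` UNIV"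
    using orbit_LD_img by simp
  then show ?thesis using LD_Dset by auto
qed

lemma D_union: "\<Union> (Orb ` Dset) = Dset"
proof
  show "\<Union> (Orb ` Dset) \<subseteq> Dset" using D_orbit_sub by auto
  show "Dset \<subseteq> \<Union> (Orb ` Dset)"
  proof
    fix x :: "('a^5) set" assume "x \<in> Dset"
    then show "x \<in> \<Union> (Orb ` Dset)" using orbit_self[of x a b c] by blast
  qed
qed

lemma D_normal: "\<exists>x1' x2' y2'. Orb (LD x1 x2 x3 y1 y2 y3) = Orb (LD x1' x2' 0 0 y2' 0)"
proof -
  define r where "r = -x3/2"
  define s where "s = -y3/2"
  define t where "t = -(y1 + r * y3)"
  have e: "x3 + 2 * r = 0" "y3 + 2 * s = 0" "y1 + r * y3 + t = 0" using two by (simp_all add: r_def s_def t_def)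
  have "gm a b c r s t ` LD x1 x2 x3 y1 y2 y3 = LD (x1 + r * x3 + (r^2 - a * r + s))
   (x2 + s * x3 + (2 * r * s - t)) 0 0 (y2 + s * y3 + (s^2 + b * s - c * r)) 0"
    unfolding gm_LD e by simp
  then have "Orb (LD x1 x2 x3 y1 y2 y3) = Orb (LD (x1 + r * x3 + (r^2 - a * r + s))
   (x2 + s * x3 + (2 * r * s - t)) 0 0 (y2 + s * y3 + (s^2 + b * s - c * r)) 0)"
    using orbit_act[of a b c r s t "LD x1 x2 x3 y1 y2 y3"] by simp
  then show ?thesis by blast
qed

lemma D_orbits_img: "Orb ` Dset = (\<lambda>(x1,x2,y2). Orb (LD x1 x2 0 0 y2 0)) ` UNIV"
proof
  show "Orb ` Dset \<subseteq> (\<lambda>(x1,x2,y2). Orb (LD x1 x2 0 0 y2 0)) ` UNIV"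
  proof
    fix Ob assume "Ob \<in> Orb ` Dset"
    then obtain L where L: "L \<in> Dset" "Ob = Orb L" by blast
    then obtain x1 x2 x3 y1 y2 y3 where "L = LD x1 x2 x3 y1 y2 y3" using D_char by blast
    then obtain x1' x2' y2' where "Ob = Orb (LD x1' x2' 0 0 y2' 0)" using L D_normal by metis
    then show "Ob \<in> (\<lambda>(x1,x2,y2). Orb (LD x1 x2 0 0 y2 0)) ` UNIV" by auto
  qed
next
  show "(\<lambda>(x1,x2,y2). Orb (LD x1 x2 0 0 y2 0)) ` UNIV \<subseteq> Orb ` Dset"
    by (auto intro!: imageI LD_Dset)
qed

lemma D_orbits_card: "card (Orb ` Dset) = CARD('a)^3"
proof -
  have "inj (\<lambda>(x1,x2,y2). Orb (LD x1 x2 0 0 y2 0))"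
  proof (rule injI, clarsimp)
    fix x1 x2 y2 x1' x2' y2' :: 'a
    assume h: "Orb (LD x1 x2 0 0 y2 0) = Orb (LD x1' x2' 0 0 y2' 0)"
    have "LD x1' x2' 0 0 y2' 0 \<in> Orb (LD x1 x2 0 0 y2 0)" using h orbit_self by metis
    then obtain r s t where "LD x1' x2' 0 0 y2' 0 = LD (x1 + r * 0 + (r^2 - a * r + s))
      (x2 + s * 0 + (2 * r * s - t)) (0 + 2 * r) (0 + r * 0 + t) (y2 + s * 0 + (s^2 + b * s - c * r)) (0 + 2 * s)"
      unfolding orbit_LD by blast
    from LD_eq[OF this] have e: "x1' = x1 + (r^2 - a * r + s)" "x2' = x2 + (2 * r * s - t)" "0 = 2 * r" "0 = t"
      "y2' = y2 + (s^2 + b * s - c * r)" "0 = 2 * s"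
      by simp_all
    then have "r = 0" "s = 0" using two by simp_all
    with e show "x1 = x1' \<and> x2 = x2' \<and> y2 = y2'" by simp
  qed
  then show ?thesis unfolding D_orbits_img by (simp add: card_image card_UNIV3 power3_eq_cube)
qed

lemma D_spread:
  assumes L: "L \<in> Dset" and L1: "L1 \<in> Orb L" and L2: "L2 \<in> Orb L" and ne: "L1 \<noteq> L2"
  shows "L1 \<inter> L2 = {0}"
proof -
  have "Orb L1 = Orb L" using orbit_mem_eq L1 by blast
  then have L2': "L2 \<in> Orb L1" using L2 by simp
  have "L1 \<in> Dset" using D_orbit_sub L L1 by blast
  then obtain x1 x2 x3 y1 y2 y3 where L1e: "L1 = LD x1 x2 x3 y1 y2 y3" using D_char by blast
  then obtain r s t where L2e: "L2 = LD (x1 + r * x3 + (r^2 - a * r + s))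
   (x2 + s * x3 + (2 * r * s - t)) (x3 + 2 * r) (y1 + r * y3 + t) (y2 + s * y3 + (s^2 + b * s - c * r)) (y3 + 2 * s)"
    using L2' unfolding L1e orbit_LD by blast
  have nz: "\<not> (r = 0 \<and> s = 0 \<and> t = 0)"
  proof
    assume "r = 0 \<and> s = 0 \<and> t = 0"
    then have "L2 = L1" using L1e L2e by simp
    then show False using ne by simp
  qed
  show ?thesis
  proof
    show "L1 \<inter> L2 \<subseteq> {0}"
    proof
      fix x assume "x \<in> L1 \<inter> L2"
      then have x1: "x \<in> L1" and x2: "x \<in> L2" by auto
      obtain \<alpha> \<beta> where xa: "x = \<alpha> *s mk x1 x2 x3 1 0 + \<beta> *s mk y1 y2 y3 0 1"
        using x1 unfolding L1e LD_def in_lin by blast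
      obtain \<alpha>' \<beta>' where xb: "x = \<alpha>' *s mk (x1 + r * x3 + (r^2 - a * r + s))
        (x2 + s * x3 + (2 * r * s - t)) (x3 + 2 * r) 1 0 + \<beta>' *s mk (y1 + r * y3 + t) (y2 + s * y3 + (s^2 + b * s - c * r)) (y3 + 2 * s) 0 1"
        using x2 unfolding L2e LD_def in_lin by blast
      have eq: "\<alpha> *s mk x1 x2 x3 1 0 + \<beta> *s mk y1 y2 y3 0 1 = \<alpha>' *s mk (x1 + r * x3 + (r^2 - a * r + s))
        (x2 + s * x3 + (2 * r * s - t)) (x3 + 2 * r) 1 0 + \<beta>' *s mk (y1 + r * y3 + t) (y2 + s * y3 + (s^2 + b * s - c * r)) (y3 + 2 * s) 0 1"
        by (rule trans[OF xa[symmetric] xb])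
      then have ab: "\<alpha>' = \<alpha>" "\<beta>' = \<beta>" by simp_all
      from eq[unfolded ab] have c0: "\<alpha> * x1 + \<beta> * y1 = \<alpha> * (x1 + r * x3 + (r^2 - a * r + s)) + \<beta> * (y1 + r * y3 + t)"
        and c1: "\<alpha> * x2 + \<beta> * y2 = \<alpha> * (x2 + s * x3 + (2 * r * s - t)) + \<beta> * (y2 + s * y3 + (s^2 + b * s - c * r))"
        and c2: "\<alpha> * x3 + \<beta> * y3 = \<alpha> * (x3 + 2 * r) + \<beta> * (y3 + 2 * s)"
        by simp_all
      have E0: "\<alpha> * (r * x3 + (r^2 - a * r + s)) + \<beta> * (r * y3 + t) = 0" using lin_diff[OF c0[unfolded add.assoc]] .
      have E1: "\<alpha> * (s * x3 + (2 * r * s - t)) + \<beta> * (s * y3 + (s^2 + b * s - c * r)) = 0" using lin_diff[OF c1[unfolded add.assoc]] .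
      have E2: "\<alpha> * (2 * r) + \<beta> * (2 * s) = 0" using lin_diff[OF c2] .
      from spread_alg[OF nz E0 E1 E2] have "\<alpha> = 0" "\<beta> = 0" by simp_all
      then show "x \<in> {0}" using xa by simp
    qed
  next
    show "{0} \<subseteq> L1 \<inter> L2" using L1e L2e by (simp add: LD_def)
  qed
qed

end

definition sol :: "'a::field \<Rightarrow> 'a \<Rightarrow> ('a^5) set" where
  "sol e4 e5 = {v. e5 * v$3 = e4 * v$4}"

definition LC :: "'a::field \<Rightarrow> 'a \<Rightarrow> 'a \<Rightarrow> 'a \<Rightarrow> 'a \<Rightarrow> 'a \<Rightarrow> ('a^5) set" where
  "LC e4 e5 x1 x2 y1 y2 = lin (mk x1 x2 1 0 0) (mk y1 y2 0 e4 e5)"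

definition Cset :: "'a::field \<Rightarrow> 'a \<Rightarrow> ('a^5) set set" where
  "Cset e4 e5 = {L. pg_line L \<and> L \<subseteq> sol e4 e5 \<and> L \<inter> ellL = {0} \<and> pg_point (L \<inter> piP)}"

lemma lin_smult_mem: "x \<in> lin u v \<Longrightarrow> k *s x \<in> lin u v"
  using lin_comb_mem[of x u v 0 k 0] by simp

lemma sol_scale:
  fixes e4 e5 z3 z4 :: "'a::field"
  assumes "\<not> (e4 = 0 \<and> e5 = 0)" "e5 * z3 = e4 * z4" "\<not> (z3 = 0 \<and> z4 = 0)"
  shows "\<exists>\<kappa>. \<kappa> \<noteq> 0 \<and> z3 = \<kappa> * e4 \<and> z4 = \<kappa> * e5"
proof (cases "e4 = 0")
  case False
  have "z4 = (z3 / e4) * e5" using assms(2) False by (simp add: field_simps)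
  moreover have "z3 = (z3 / e4) * e4" using False by simp
  moreover have "z3 / e4 \<noteq> 0" using False assms(3) \<open>z4 = (z3 / e4) * e5\<close> by auto
  ultimately show ?thesis by blast
next
  case True
  then have e5: "e5 \<noteq> 0" using assms(1) by simp
  then have "z3 = 0" using assms(2) True by simp
  then have "z4 \<noteq> 0" using assms(3) by simp
  have "z4 = (z4 / e5) * e5" using e5 by simp
  moreover have "z3 = (z4 / e5) * e4" using True \<open>z3 = 0\<close> by simp
  moreover have "z4 / e5 \<noteq> 0" using e5 \<open>z4 \<noteq> 0\<close> by simp
  ultimately show ?thesis by blast
qed

lemma LC_ind:
  assumes "\<not> (e4 = 0 \<and> e5 = 0)"
  shows "ind (mk x1 x2 1 0 0) (mk y1 y2 0 e4 (e5::'a::field))"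
proof (cases "e4 = 0")
  case True
  then show ?thesis using assms by (intro ind_minor[of _ 2 _ 4]) simp
next
  case False
  then show ?thesis by (intro ind_minor[of _ 2 _ 3]) simp
qed

lemma LC_line: "\<not> (e4 = 0 \<and> e5 = 0) \<Longrightarrow> pg_line (LC e4 e5 x1 x2 y1 y2)"
  unfolding LC_def by (rule line_ln[OF LC_ind])

lemma LC_Cset:
  assumes e: "\<not> (e4 = 0 \<and> e5 = 0)"
  shows "LC e4 e5 x1 x2 y1 y2 \<in> Cset e4 e5"
proof -
  let ?u = "mk x1 x2 1 0 (0::'a)" and ?v = "mk y1 y2 0 e4 e5"
  have sub: "LC e4 e5 x1 x2 y1 y2 \<subseteq> sol e4 e5"
  proof
    fix x assume "x \<in> LC e4 e5 x1 x2 y1 y2"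
    then obtain \<alpha> \<beta> where "x = \<alpha> *s ?u + \<beta> *s ?v" unfolding LC_def in_lin by blast
    then show "x \<in> sol e4 e5" unfolding sol_def by (simp add: algebra_simps)
  qed
  have b0: "\<beta> = 0" if "\<beta> * e4 = 0" "\<beta> * e5 = 0" for \<beta> using that e by auto
  have ell: "LC e4 e5 x1 x2 y1 y2 \<inter> ellL = {0}"
  proof
    show "LC e4 e5 x1 x2 y1 y2 \<inter> ellL \<subseteq> {0}"
    proof
      fix x assume "x \<in> LC e4 e5 x1 x2 y1 y2 \<inter> ellL"
      then have "x \<in> lin ?u ?v" "x$2 = 0" "x$3 = 0" "x$4 = 0" unfolding LC_def ellL_def' by auto
      then obtain \<alpha> \<beta> where x: "x = \<alpha> *s ?u + \<beta> *s ?v" "x$2 = 0" "x$3 = 0" "x$4 = 0" unfolding in_lin by blast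
      have "x$2 = \<alpha>" "x$3 = \<beta> * e4" "x$4 = \<beta> * e5" using x(1) by simp_all
      then have "\<alpha> = 0" "\<beta> * e4 = 0" "\<beta> * e5 = 0" using x(2-4) by simp_all
      then have "\<alpha> = 0" "\<beta> = 0" using b0 by blast+
      then show "x \<in> {0}" using x(1) by simp
    qed
  qed (simp add: LC_def ellL_def')
  have pi: "LC e4 e5 x1 x2 y1 y2 \<inter> piP = lin1 ?u"
  proof
    show "LC e4 e5 x1 x2 y1 y2 \<inter> piP \<subseteq> lin1 ?u"
    proof
      fix x assume "x \<in> LC e4 e5 x1 x2 y1 y2 \<inter> piP"
      then have "x \<in> lin ?u ?v" "x$3 = 0" "x$4 = 0" unfolding LC_def piP_def' by auto
      then obtain \<alpha> \<beta> where x: "x = \<alpha> *s ?u + \<beta> *s ?v" "x$3 = 0" "x$4 = 0" unfolding in_lin by blast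
      have "x$3 = \<beta> * e4" "x$4 = \<beta> * e5" using x(1) by simp_all
      then have "\<beta> * e4 = 0" "\<beta> * e5 = 0" using x(2-3) by simp_all
      then have "\<beta> = 0" using b0 by blast
      then show "x \<in> lin1 ?u" using x(1) unfolding in_lin1 by simp
    qed
  next
    show "lin1 ?u \<subseteq> LC e4 e5 x1 x2 y1 y2 \<inter> piP"
    proof
      fix x assume "x \<in> lin1 ?u"
      then obtain \<alpha> where x: "x = \<alpha> *s ?u" unfolding in_lin1 by blast
      then have "x = \<alpha> *s ?u + 0 *s ?v" by simp
      then have "x \<in> LC e4 e5 x1 x2 y1 y2" unfolding LC_def in_lin by blast
      moreover have "x \<in> piP" using x unfolding piP_def' by simp
      ultimately show "x \<in> LC e4 e5 x1 x2 y1 y2 \<inter> piP" by simp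
    qed
  qed
  have "pg_point (lin1 ?u)" by (rule point_ln1) simp
  then show ?thesis unfolding Cset_def using LC_line[OF e] sub ell pi by simp
qed

lemma LC_eq:
  assumes e: "\<not> (e4 = 0 \<and> e5 = 0)" and h: "LC e4 e5 x1 x2 y1 y2 = LC e4 e5 x1' x2' y1' y2'"
  shows "x1 = x1' \<and> x2 = x2' \<and> y1 = y1' \<and> y2 = y2'"
proof -
  have "mk x1 x2 1 0 0 \<in> LC e4 e5 x1' x2' y1' y2'" "mk y1 y2 0 e4 e5 \<in> LC e4 e5 x1' x2' y1' y2'"
    using h unfolding LC_def by (metis lin_mem(1), metis lin_mem(2))
  then obtain \<alpha> \<beta> \<gamma> \<delta> where
    A: "mk x1 x2 1 0 0 = \<alpha> *s mk x1' x2' 1 0 0 + \<beta> *s mk y1' y2' 0 e4 e5"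
    and B: "mk y1 y2 0 e4 e5 = \<gamma> *s mk x1' x2' 1 0 0 + \<delta> *s mk y1' y2' 0 e4 e5"
    unfolding LC_def in_lin by blast
  from A have a1: "\<alpha> = 1" "\<beta> * e4 = 0" "\<beta> * e5 = 0" by simp_all
  then have "\<beta> = 0" using e by auto
  with A a1 have 1: "x1 = x1'" "x2 = x2'" by simp_all
  from B have g: "\<gamma> = 0" "e4 = \<delta> * e4" "e5 = \<delta> * e5" by simp_all
  then have "\<delta> = 1" using e by (metis mult_cancel_right2)
  with B g have "y1 = y1'" "y2 = y2'" by simp_all
  with 1 show ?thesis by simp
qed

lemma C_char:
  assumes e: "\<not> (e4 = 0 \<and> e5 = 0)" and L: "L \<in> Cset e4 e5"
  shows "\<exists>x1 x2 y1 y2. L = LC e4 e5 x1 x2 y1 y2"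
proof -
  have lL: "pg_line L" and Ls: "L \<subseteq> sol e4 e5" and Ll: "L \<inter> ellL = {0}" and Lp: "pg_point (L \<inter> piP)"
    using L unfolding Cset_def by auto
  obtain u0 v0 where uv: "ind u0 v0" "L = lin u0 v0" using lL unfolding line_iff by blast
  obtain w where w: "w \<noteq> 0" "L \<inter> piP = lin1 w" using Lp unfolding point_iff by blast
  have wi: "w \<in> L \<inter> piP" unfolding w(2) by simp
  then have wL: "w \<in> L" and wp: "w \<in> piP" by auto
  have w2: "w$2 \<noteq> 0"
  proof
    assume "w$2 = 0"
    then have "w \<in> L \<inter> ellL" using wL wp unfolding ellL_def' piP_def' by simp
    then show False using Ll w(1) by simp
  qed
  define u where "u = (1 / w$2) *s w"
  have uL: "u \<in> L" unfolding u_def using wL uv(2) lin_smult_mem by blast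
  have u: "u$2 = 1" "u$3 = 0" "u$4 = 0" using w2 wp unfolding u_def piP_def' by simp_all
  have "\<not> L \<subseteq> piP"
  proof
    assume "L \<subseteq> piP"
    then have "L \<inter> piP = L" by blast
    then have "pg_point L" using Lp by simp
    then show False using lL line_not_point by blast
  qed
  then obtain z where zL: "z \<in> L" and zp: "z \<notin> piP" by blast
  have "z \<in> sol e4 e5" using zL Ls by blast
  then have "e5 * z$3 = e4 * z$4" unfolding sol_def by simp
  moreover have "\<not> (z$3 = 0 \<and> z$4 = 0)" using zp unfolding piP_def' by simp
  ultimately obtain \<kappa> where k: "\<kappa> \<noteq> 0" "z$3 = \<kappa> * e4" "z$4 = \<kappa> * e5" using sol_scale[OF e] by blast
  define z' where "z' = (1 / \<kappa>) *s z + (- z$2 / \<kappa>) *s u"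
  have z'L: "z' \<in> L" unfolding z'_def using zL uL uv(2) lin_comb_mem by blast
  have z': "z'$2 = 0" "z'$3 = e4" "z'$4 = e5" using k u unfolding z'_def by (simp_all add: field_simps)
  have "ind u z'"
  proof (cases "e4 = 0")
    case True
    then show ?thesis using e u z' by (intro ind_minor[of _ 2 _ 4]) simp
  next
    case False
    then show ?thesis using u z' by (intro ind_minor[of _ 2 _ 3]) simp
  qed
  then have "L = lin u z'" using line_eq[OF lL _ uL z'L] by simp
  also have "\<dots> = LC e4 e5 (u$0) (u$1) (z'$0) (z'$1)"
  proof -
    have "u = mk (u$0) (u$1) 1 0 0" "z' = mk (z'$0) (z'$1) 0 e4 e5"
      using u z' by (simp_all add: vec5_eq)
    then show ?thesis unfolding LC_def by (rule arg_cong2)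
  qed
  finally show ?thesis by blast
qed

context ctx begin

definition TC3 :: "'a \<Rightarrow> 'a \<Rightarrow> 'a \<Rightarrow> 'a \<Rightarrow> 'a \<Rightarrow> 'a \<Rightarrow> 'a \<Rightarrow> 'a" where
  "TC3 e4 e5 r s t x1 y1 = y1 + (r^2 - a * r + s) * e4 + t * e5 - (2 * r * e4 + 2 * s * e5) * (x1 + r)"
definition TC4 :: "'a \<Rightarrow> 'a \<Rightarrow> 'a \<Rightarrow> 'a \<Rightarrow> 'a \<Rightarrow> 'a \<Rightarrow> 'a \<Rightarrow> 'a" where
  "TC4 e4 e5 r s t x2 y2 = y2 + (2 * r * s - t) * e4 + (s^2 + b * s - c * r) * e5 - (2 * r * e4 + 2 * s * e5) * (x2 + s)"
definition ICf :: "'a \<Rightarrow> 'a \<Rightarrow> 'a \<Rightarrow> 'a \<Rightarrow> 'a \<Rightarrow> 'a \<Rightarrow> 'a" where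
  "ICf e4 e5 x1 x2 y1 y2 = e4 * y1 + e5 * y2 + (e4 * x1 + e5 * x2)^2 + (a * e4^2 + c * e5^2) * x1 - (e4^2 + b * e5^2) * x2"

lemma gm_LC: "gm a b c r s t ` LC e4 e5 x1 x2 y1 y2 =
   LC e4 e5 (x1 + r) (x2 + s) (TC3 e4 e5 r s t x1 y1) (TC4 e4 e5 r s t x2 y2)"
proof -
  have gu: "gm a b c r s t (mk x1 x2 1 0 0) = mk (x1 + r) (x2 + s) 1 0 0" by (simp add: gm_def)
  have gv: "gm a b c r s t (mk y1 y2 0 e4 e5) = mk (TC3 e4 e5 r s t x1 y1) (TC4 e4 e5 r s t x2 y2) 0 e4 e5
     + (2 * r * e4 + 2 * s * e5) *s mk (x1 + r) (x2 + s) 1 0 0"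
    unfolding vec5_eq by (simp add: gm_def TC3_def TC4_def algebra_simps)
  show ?thesis unfolding LC_def gm_img_lin gu gv lin_shift ..
qed

lemma IC_inv: "ICf e4 e5 (x1 + r) (x2 + s) (TC3 e4 e5 r s t x1 y1) (TC4 e4 e5 r s t x2 y2) = ICf e4 e5 x1 x2 y1 y2"
  unfolding ICf_def TC3_def TC4_def by algebra

lemma orbit_LC_img: "Orb (LC e4 e5 x1 x2 y1 y2) =
   (\<lambda>(r,s,t). LC e4 e5 (x1 + r) (x2 + s) (TC3 e4 e5 r s t x1 y1) (TC4 e4 e5 r s t x2 y2)) ` UNIV"
  unfolding G_orbit_gm gm_LC by auto

lemma C_orbit_card:
  assumes e: "\<not> (e4 = 0 \<and> e5 = 0)"
  shows "card (Orb (LC e4 e5 x1 x2 y1 y2)) = CARD('a)^3"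
proof -
  have "inj (\<lambda>(r,s,t). LC e4 e5 (x1 + r) (x2 + s) (TC3 e4 e5 r s t x1 y1) (TC4 e4 e5 r s t x2 y2))"
  proof (rule injI, clarsimp)
    fix r s t r' s' t' :: 'a
    assume "LC e4 e5 (x1 + r) (x2 + s) (TC3 e4 e5 r s t x1 y1) (TC4 e4 e5 r s t x2 y2) =
            LC e4 e5 (x1 + r') (x2 + s') (TC3 e4 e5 r' s' t' x1 y1) (TC4 e4 e5 r' s' t' x2 y2)"
    from LC_eq[OF e this] have h: "r = r'" "s = s'" "TC3 e4 e5 r s t x1 y1 = TC3 e4 e5 r' s' t' x1 y1"
      "TC4 e4 e5 r s t x2 y2 = TC4 e4 e5 r' s' t' x2 y2" by auto
    then have "t * e5 = t' * e5" "t * e4 = t' * e4" unfolding TC3_def TC4_def by (auto simp: algebra_simps)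
    then have "t = t'" using e by auto
    with h show "r = r' \<and> s = s' \<and> t = t'" by simp
  qed
  then show ?thesis unfolding orbit_LC_img by (simp add: card_image card_UNIV3 power3_eq_cube)
qed

lemma C_orbit_sub: "\<not> (e4 = 0 \<and> e5 = 0) \<Longrightarrow> L \<in> Cset e4 e5 \<Longrightarrow> Orb L \<subseteq> Cset e4 e5"
proof -
  assume e: "\<not> (e4 = 0 \<and> e5 = 0)" and "L \<in> Cset e4 e5"
  then obtain x1 x2 y1 y2 where L: "L = LC e4 e5 x1 x2 y1 y2" using C_char by blast
  have "Orb L = (\<lambda>(r,s,t). LC e4 e5 (x1 + r) (x2 + s) (TC3 e4 e5 r s t x1 y1) (TC4 e4 e5 r s t x2 y2)) ` UNIV"
    unfolding L by (rule orbit_LC_img)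
  then show ?thesis using LC_Cset[OF e] by auto
qed

definition RC :: "'a \<Rightarrow> 'a \<Rightarrow> 'a \<Rightarrow> ('a^5) set" where
  "RC e4 e5 k = LC e4 e5 0 0 (if e4 = 0 then 0 else k / e4) (if e4 = 0 then k / e5 else 0)"

lemma IC_RC: "\<not> (e4 = 0 \<and> e5 = 0) \<Longrightarrow>
   ICf e4 e5 0 0 (if e4 = 0 then 0 else k / e4) (if e4 = 0 then k / e5 else 0) = k"
  unfolding ICf_def by auto

lemma C_normal:
  assumes e: "\<not> (e4 = 0 \<and> e5 = 0)"
  shows "Orb (LC e4 e5 x1 x2 y1 y2) = Orb (RC e4 e5 (ICf e4 e5 x1 x2 y1 y2))"
proof -
  define y1' where "y1' = TC3 e4 e5 (-x1) (-x2) 0 x1 y1"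
  define y2' where "y2' = TC4 e4 e5 (-x1) (-x2) 0 x2 y2"
  have o1: "Orb (LC e4 e5 x1 x2 y1 y2) = Orb (LC e4 e5 0 0 y1' y2')"
    using orbit_act[of a b c "-x1" "-x2" 0 "LC e4 e5 x1 x2 y1 y2"]
    unfolding gm_LC y1'_def y2'_def by simp
  have k: "ICf e4 e5 0 0 y1' y2' = ICf e4 e5 x1 x2 y1 y2"
    using IC_inv[of e4 e5 x1 "-x1" x2 "-x2" 0 y1 y2] unfolding y1'_def y2'_def by simp
  have g: "gm a b c 0 0 t ` LC e4 e5 0 0 y1' y2' = LC e4 e5 0 0 (y1' + t * e5) (y2' - t * e4)" for t
    unfolding gm_LC by (simp add: TC3_def TC4_def)
  obtain t where t: "LC e4 e5 0 0 (y1' + t * e5) (y2' - t * e4) = RC e4 e5 (ICf e4 e5 0 0 y1' y2')"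
  proof (cases "e4 = 0")
    case True
    then have e5: "e5 \<noteq> 0" using e by simp
    show ?thesis
      by (rule that[of "- y1' / e5"]) (use True e5 in \<open>simp add: RC_def ICf_def\<close>)
  next
    case False
    show ?thesis
      by (rule that[of "y2' / e4"]) (use False in \<open>simp add: RC_def ICf_def field_simps\<close>)
  qed
  have "Orb (LC e4 e5 0 0 y1' y2') = Orb (RC e4 e5 (ICf e4 e5 0 0 y1' y2'))"
    using orbit_act[of a b c 0 0 t "LC e4 e5 0 0 y1' y2'"] unfolding g t by simp
  then show ?thesis using o1 k by simp
qed

lemma C_orbits_img:
  assumes e: "\<not> (e4 = 0 \<and> e5 = 0)"
  shows "Orb ` Cset e4 e5 = range (\<lambda>k. Orb (RC e4 e5 k))"
proof
  show "Orb ` Cset e4 e5 \<subseteq> range (\<lambda>k. Orb (RC e4 e5 k))"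
  proof
    fix Ob assume "Ob \<in> Orb ` Cset e4 e5"
    then obtain L where L: "L \<in> Cset e4 e5" "Ob = Orb L" by blast
    then obtain x1 x2 y1 y2 where "L = LC e4 e5 x1 x2 y1 y2" using C_char[OF e] by blast
    then show "Ob \<in> range (\<lambda>k. Orb (RC e4 e5 k))" using L C_normal[OF e] by auto
  qed
next
  show "range (\<lambda>k. Orb (RC e4 e5 k)) \<subseteq> Orb ` Cset e4 e5"
    unfolding RC_def using LC_Cset[OF e] by (auto intro!: imageI)
qed

lemma C_orbits_card:
  assumes e: "\<not> (e4 = 0 \<and> e5 = 0)"
  shows "card (Orb ` Cset e4 e5) = CARD('a)"
proof -
  have "inj (\<lambda>k. Orb (RC e4 e5 k))"
  proof (rule injI)
    fix k k' :: 'a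
    assume h: "Orb (RC e4 e5 k) = Orb (RC e4 e5 k')"
    let ?y1 = "(if e4 = 0 then 0 else k / e4)" and ?y2 = "(if e4 = 0 then k / e5 else 0)"
    let ?y1' = "(if e4 = 0 then 0 else k' / e4)" and ?y2' = "(if e4 = 0 then k' / e5 else 0)"
    have "RC e4 e5 k' \<in> Orb (RC e4 e5 k)" using h orbit_self by metis
    then obtain r s t where "LC e4 e5 0 0 ?y1' ?y2' = LC e4 e5 (0 + r) (0 + s) (TC3 e4 e5 r s t 0 ?y1) (TC4 e4 e5 r s t 0 ?y2)"
      unfolding RC_def orbit_LC_img by auto
    from LC_eq[OF e this] have "ICf e4 e5 0 0 ?y1' ?y2' = ICf e4 e5 (0 + r) (0 + s) (TC3 e4 e5 r s t 0 ?y1) (TC4 e4 e5 r s t 0 ?y2)"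
      by simp
    also have "\<dots> = ICf e4 e5 0 0 ?y1 ?y2" by (rule IC_inv)
    finally show "k = k'" using IC_RC[OF e, of k] IC_RC[OF e, of k'] by simp
  qed
  then show ?thesis unfolding C_orbits_img[OF e] by (simp add: card_image)
qed

end

definition phi :: "'a::field \<Rightarrow> 'a \<Rightarrow> 'a^5 \<Rightarrow> 'a" where
  "phi p1 p2 w = p1 * w$1 - p2 * w$0"

lemma ind_pi:
  assumes "x$3 = 0" "x$4 = 0" "x \<noteq> 0" "\<not> (w$3 = 0 \<and> w$4 = 0)"
  shows "ind x w"
  unfolding ind_def
proof (intro allI impI)
  fix \<alpha> \<beta> :: 'a assume h: "\<alpha> *s x + \<beta> *s w = 0"
  have "(\<alpha> *s x + \<beta> *s w)$3 = 0" "(\<alpha> *s x + \<beta> *s w)$4 = 0" using h by simp_all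
  then have "\<beta> * w$3 = 0" "\<beta> * w$4 = 0" using assms(1,2) by simp_all
  then have b: "\<beta> = 0" using assms(4) by auto
  then have "\<alpha> *s x = 0" using h by simp
  then have "\<alpha> = 0" using assms(3) by simp
  with b show "\<alpha> = 0 \<and> \<beta> = 0" by simp
qed

lemma lin_p_norm:
  fixes p1 p2 :: "'a::field"
  assumes p: "\<not> (p1 = 0 \<and> p2 = 0)" and e: "w'$2 = w$2" "w'$3 = w$3" "w'$4 = w$4"
    and f: "phi p1 p2 w' = phi p1 p2 w"
  shows "lin (mk p1 p2 0 0 0) w' = lin (mk p1 p2 0 0 0) w"
proof -
  define d0 where "d0 = w'$0 - w$0"
  define d1 where "d1 = w'$1 - w$1"
  have pd: "p1 * d1 = p2 * d0" using f unfolding phi_def d0_def d1_def by (simp add: algebra_simps)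
  obtain \<kappa> where k: "d0 = \<kappa> * p1" "d1 = \<kappa> * p2"
  proof (cases "p1 = 0")
    case True
    then have p2: "p2 \<noteq> 0" using p by simp
    then have "d0 = 0" using pd True by simp
    then show ?thesis using True p2 by (intro that[of "d1 / p2"]) simp_all
  next
    case False
    have "d1 = (d0 / p1) * p2" using pd False by (simp add: field_simps)
    then show ?thesis using False by (intro that[of "d0 / p1"]) simp_all
  qed
  have "w' = w + \<kappa> *s mk p1 p2 0 0 0"
    using e k unfolding vec5_eq d0_def d1_def by (simp add: algebra_simps)
  then show ?thesis by (simp only: lin_shift)
qed

lemma lin_p_inj:
  fixes p1 p2 :: "'a::field"
  assumes h: "lin (mk p1 p2 0 0 0) w = lin (mk p1 p2 0 0 0) w'"
    and j: "j = 2 \<or> j = 3 \<or> j = 4" and wj: "w$j = w'$j" "w$j \<noteq> 0"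
  shows "w'$2 = w$2 \<and> w'$3 = w$3 \<and> w'$4 = w$4 \<and> phi p1 p2 w' = phi p1 p2 w"
proof -
  have "w' \<in> lin (mk p1 p2 0 0 0) w" using h by simp
  then obtain \<alpha> \<beta> where w': "w' = \<alpha> *s mk p1 p2 0 0 0 + \<beta> *s w" unfolding in_lin by blast
  have pj: "(mk (\<alpha> * p1) (\<alpha> * p2) 0 0 0 :: 'a^5)$j = 0" using j by auto
  have "w'$j = \<beta> * w$j" using w' pj by simp
  then have b: "\<beta> = 1" using wj by simp
  show ?thesis using w' b unfolding phi_def by (simp add: algebra_simps)
qed

lemma ell_lin: "ellL = lin (mk 1 0 0 0 0) (mk 0 1 0 0 (0::'a::field))"
proof
  show "ellL \<subseteq> lin (mk 1 0 0 0 0) (mk 0 1 0 0 (0::'a::field))"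
  proof
    fix v :: "'a^5" assume "v \<in> ellL"
    then have "v = v$0 *s mk 1 0 0 0 0 + v$1 *s mk 0 1 0 0 0" unfolding ellL_def' vec5_eq by simp
    then show "v \<in> lin (mk 1 0 0 0 0) (mk 0 1 0 0 0)" unfolding in_lin by blast
  qed
next
  show "lin (mk 1 0 0 0 0) (mk 0 1 0 0 (0::'a::field)) \<subseteq> ellL"
    unfolding ellL_def' lin_def by auto
qed

lemma ell_line: "pg_line (ellL :: ('a::field^5) set)"
  unfolding ell_lin by (rule line_ln, rule ind_minor[of _ 0 _ 1]) simp

lemma line_sub_eq:
  assumes "pg_line L" "pg_line M" "L \<subseteq> M"
  shows "L = M"
proof -
  obtain u v where uv: "ind u v" "L = lin u v" using assms(1) unfolding line_iff by blast
  have "u \<in> M" "v \<in> M" using assms(3) uv(2) by auto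
  then have "M = lin u v" using line_eq[OF assms(2) uv(1)] by simp
  then show ?thesis using uv(2) by simp
qed

definition Aset :: "'a::field \<Rightarrow> 'a \<Rightarrow> ('a^5) set set" where
  "Aset p1 p2 = {L. pg_line L \<and> L \<subseteq> piP \<and> lin1 (mk p1 p2 0 0 0) \<subseteq> L \<and> L \<noteq> ellL}"

lemma lin1_sub: "lin1 p \<subseteq> lin p w"
proof
  fix x assume "x \<in> lin1 p"
  then obtain \<alpha> where "x = \<alpha> *s p" unfolding in_lin1 by blast
  then have "x = \<alpha> *s p + 0 *s w" by simp
  then show "x \<in> lin p w" unfolding in_lin by blast
qed

lemma A_intro:
  assumes p: "\<not> (p1 = 0 \<and> p2 = 0)" and w: "w$2 = 1" "w$3 = 0" "w$4 = 0"
  shows "lin (mk p1 p2 0 0 0) w \<in> Aset p1 p2"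
proof -
  have ind: "ind (mk p1 p2 0 0 0) w"
  proof (cases "p1 = 0")
    case True
    then show ?thesis using p w by (intro ind_minor[of _ 1 _ 2]) simp
  next
    case False
    then show ?thesis using w by (intro ind_minor[of _ 0 _ 2]) simp
  qed
  have sub: "lin (mk p1 p2 0 0 0) w \<subseteq> piP"
    unfolding lin_def piP_def' using w by auto
  have ne: "lin (mk p1 p2 0 0 0) w \<noteq> ellL"
  proof
    assume "lin (mk p1 p2 0 0 0) w = ellL"
    then have "w \<in> ellL" using lin_mem(2) by metis
    then show False using w unfolding ellL_def' by simp
  qed
  show ?thesis unfolding Aset_def using line_ln[OF ind] sub ne lin1_sub by blast
qed

lemma A_char:
  assumes p: "\<not> (p1 = 0 \<and> p2 = 0)" and L: "L \<in> Aset p1 p2"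
  shows "\<exists>w. w$2 = 1 \<and> w$3 = 0 \<and> w$4 = 0 \<and> L = lin (mk p1 p2 0 0 0) w"
proof -
  have lL: "pg_line L" and Lp: "L \<subseteq> piP" and pL: "lin1 (mk p1 p2 0 0 0) \<subseteq> L" and ne: "L \<noteq> ellL"
    using L unfolding Aset_def by auto
  have "\<exists>z\<in>L. z$2 \<noteq> 0"
  proof (rule ccontr)
    assume "\<not> (\<exists>z\<in>L. z$2 \<noteq> 0)"
    then have "L \<subseteq> ellL" using Lp unfolding piP_def' ellL_def' by auto
    then have "L = ellL" using line_sub_eq[OF lL ell_line] by simp
    then show False using ne by simp
  qed
  then obtain z where zL: "z \<in> L" and z2: "z$2 \<noteq> 0" by blast
  obtain u0 v0 where uv: "ind u0 v0" "L = lin u0 v0" using lL unfolding line_iff by blast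
  define w where "w = (1 / z$2) *s z"
  have wL: "w \<in> L" unfolding w_def using zL uv(2) lin_smult_mem by blast
  have zp: "z$3 = 0" "z$4 = 0" using zL Lp unfolding piP_def' by auto
  have w: "w$2 = 1" "w$3 = 0" "w$4 = 0" using z2 zp unfolding w_def by simp_all
  have pinL: "mk p1 p2 0 0 0 \<in> L" using pL lin1_mem(1) by blast
  have ind: "ind (mk p1 p2 0 0 0) w"
  proof (cases "p1 = 0")
    case True
    then show ?thesis using p w by (intro ind_minor[of _ 1 _ 2]) simp
  next
    case False
    then show ?thesis using w by (intro ind_minor[of _ 0 _ 2]) simp
  qed
  have "L = lin (mk p1 p2 0 0 0) w" using line_eq[OF lL ind pinL wL] .
  then show ?thesis using w by blast
qed

definition LA :: "'a::field \<Rightarrow> 'a \<Rightarrow> 'a \<Rightarrow> ('a^5) set" where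
  "LA p1 p2 k = lin (mk p1 p2 0 0 0) (mk (if p1 = 0 then - k / p2 else 0) (if p1 = 0 then 0 else k / p1) 1 0 0)"

lemma phi_yk: "\<not> (p1 = 0 \<and> p2 = 0) \<Longrightarrow>
  phi p1 p2 (mk (if p1 = 0 then - k / p2 else 0) (if p1 = 0 then 0 else k / p1) y3 y4 y5) = k"
  unfolding phi_def by auto

lemma A_normal:
  assumes p: "\<not> (p1 = 0 \<and> p2 = 0)" and w: "w$2 = 1" "w$3 = 0" "w$4 = 0"
  shows "lin (mk p1 p2 0 0 0) w = LA p1 p2 (phi p1 p2 w)"
  unfolding LA_def by (rule lin_p_norm[OF p]) (use w phi_yk[OF p] in simp_all)

lemma A_range:
  assumes p: "\<not> (p1 = 0 \<and> p2 = 0)"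
  shows "Aset p1 p2 = range (LA p1 p2)"
proof
  show "Aset p1 p2 \<subseteq> range (LA p1 p2)"
  proof
    fix L assume "L \<in> Aset p1 p2"
    then obtain w where "w$2 = 1" "w$3 = 0" "w$4 = 0" "L = lin (mk p1 p2 0 0 0) w" using A_char[OF p] by blast
    then show "L \<in> range (LA p1 p2)" using A_normal[OF p] by auto
  qed
next
  show "range (LA p1 p2) \<subseteq> Aset p1 p2"
    unfolding LA_def using A_intro[OF p] by auto
qed

lemma A_card:
  assumes p: "\<not> (p1 = 0 \<and> p2 = 0)"
  shows "card (Aset p1 p2 :: ('a::{field,finite}^5) set set) = CARD('a)"
proof -
  have "inj (LA p1 p2 :: 'a \<Rightarrow> _)"
  proof (rule injI)
    fix k k' :: 'a assume "LA p1 p2 k = LA p1 p2 k'"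
    from lin_p_inj[OF this[unfolded LA_def], of 2] have
      "phi p1 p2 (mk (if p1 = 0 then - k' / p2 else 0) (if p1 = 0 then 0 else k' / p1) 1 0 0) =
       phi p1 p2 (mk (if p1 = 0 then - k / p2 else 0) (if p1 = 0 then 0 else k / p1) 1 0 0)" by simp
    then show "k = k'" using phi_yk[OF p] by simp
  qed
  then show ?thesis unfolding A_range[OF p] by (simp add: card_image)
qed

context ctx begin

lemma gm_p: "gm a b c r s t (mk p1 p2 0 0 0) = mk p1 p2 0 0 0"
  by (simp add: gm_def)

lemma orbit_lin_p: "Orb (lin (mk p1 p2 0 0 0) w) = {lin (mk p1 p2 0 0 0) (gm a b c r s t w) | r s t. True}"
  unfolding G_orbit_gm gm_img_lin gm_p by simp

lemma A_orbit:
  assumes p: "\<not> (p1 = 0 \<and> p2 = 0)" and L: "L \<in> Aset p1 p2"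
  shows "Orb L = Aset p1 p2"
proof -
  obtain w where w: "w$2 = 1" "w$3 = 0" "w$4 = 0" and Lw: "L = lin (mk p1 p2 0 0 0) w"
    using A_char[OF p L] by blast
  show ?thesis
  proof
    show "Orb L \<subseteq> Aset p1 p2"
    proof
      fix L' assume "L' \<in> Orb L"
      then obtain r s t where "L' = lin (mk p1 p2 0 0 0) (gm a b c r s t w)"
        unfolding Lw orbit_lin_p by blast
      moreover have "(gm a b c r s t w)$2 = 1" "(gm a b c r s t w)$3 = 0" "(gm a b c r s t w)$4 = 0"
        using w by (simp_all add: gm_def)
      ultimately show "L' \<in> Aset p1 p2" using A_intro[OF p] by simp
    qed
  next
    show "Aset p1 p2 \<subseteq> Orb L"
    proof
      fix L' assume "L' \<in> Aset p1 p2"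
      then obtain w' where w': "w'$2 = 1" "w'$3 = 0" "w'$4 = 0" and Lw': "L' = lin (mk p1 p2 0 0 0) w'"
        using A_char[OF p] by blast
      have "gm a b c (w'$0 - w$0) (w'$1 - w$1) 0 w = w'"
        using w w' unfolding vec5_eq by (simp add: gm_def)
      then have "L' = lin (mk p1 p2 0 0 0) (gm a b c (w'$0 - w$0) (w'$1 - w$1) 0 w)" using Lw' by simp
      then show "L' \<in> Orb L" unfolding Lw orbit_lin_p by blast
    qed
  qed
qed

end

definition Bset :: "'a::field \<Rightarrow> 'a \<Rightarrow> 'a \<Rightarrow> 'a \<Rightarrow> ('a^5) set set" where
  "Bset e4 e5 p1 p2 = {L. pg_line L \<and> L \<subseteq> sol e4 e5 \<and> lin1 (mk p1 p2 0 0 0) \<subseteq> L \<and> \<not> L \<subseteq> piP}"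

lemma B_intro:
  assumes p: "\<not> (p1 = 0 \<and> p2 = 0)" and e: "\<not> (e4 = 0 \<and> e5 = 0)" and w: "w$3 = e4" "w$4 = e5"
  shows "lin (mk p1 p2 0 0 0) w \<in> Bset e4 e5 p1 p2"
proof -
  have ind: "ind (mk p1 p2 0 0 0) w" by (rule ind_pi) (use p e w in simp_all)
  have sub: "lin (mk p1 p2 0 0 0) w \<subseteq> sol e4 e5"
  proof
    fix x assume "x \<in> lin (mk p1 p2 0 0 0) w"
    then obtain \<alpha> \<beta> where "x = \<alpha> *s mk p1 p2 0 0 0 + \<beta> *s w" unfolding in_lin by blast
    then show "x \<in> sol e4 e5" unfolding sol_def using w by (simp add: algebra_simps)
  qed
  have np: "\<not> lin (mk p1 p2 0 0 0) w \<subseteq> piP"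
  proof
    assume "lin (mk p1 p2 0 0 0) w \<subseteq> piP"
    then have "w \<in> piP" using lin_mem(2) by blast
    then show False using w e unfolding piP_def' by simp
  qed
  show ?thesis unfolding Bset_def using line_ln[OF ind] sub np lin1_sub by blast
qed

lemma B_char:
  assumes p: "\<not> (p1 = 0 \<and> p2 = 0)" and e: "\<not> (e4 = 0 \<and> e5 = 0)" and L: "L \<in> Bset e4 e5 p1 p2"
  shows "\<exists>w. w$3 = e4 \<and> w$4 = e5 \<and> L = lin (mk p1 p2 0 0 0) w"
proof -
  have lL: "pg_line L" and Ls: "L \<subseteq> sol e4 e5" and pL: "lin1 (mk p1 p2 0 0 0) \<subseteq> L" and np: "\<not> L \<subseteq> piP"
    using L unfolding Bset_def by auto
  obtain u0 v0 where uv: "ind u0 v0" "L = lin u0 v0" using lL unfolding line_iff by blast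
  obtain z where zL: "z \<in> L" and zp: "z \<notin> piP" using np by blast
  have "z \<in> sol e4 e5" using zL Ls by blast
  then have "e5 * z$3 = e4 * z$4" unfolding sol_def by simp
  moreover have "\<not> (z$3 = 0 \<and> z$4 = 0)" using zp unfolding piP_def' by simp
  ultimately obtain \<kappa> where k: "\<kappa> \<noteq> 0" "z$3 = \<kappa> * e4" "z$4 = \<kappa> * e5" using sol_scale[OF e] by blast
  define w where "w = (1 / \<kappa>) *s z"
  have wL: "w \<in> L" unfolding w_def using zL uv(2) lin_smult_mem by blast
  have w: "w$3 = e4" "w$4 = e5" using k unfolding w_def by simp_all
  have pinL: "mk p1 p2 0 0 0 \<in> L" using pL lin1_mem(1) by blast
  have ind: "ind (mk p1 p2 0 0 0) w" by (rule ind_pi) (use p e w in simp_all)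
  have "L = lin (mk p1 p2 0 0 0) w" using line_eq[OF lL ind pinL wL] .
  then show ?thesis using w by blast
qed

definition LB :: "'a::field \<Rightarrow> 'a \<Rightarrow> 'a \<Rightarrow> 'a \<Rightarrow> 'a \<Rightarrow> 'a \<Rightarrow> ('a^5) set" where
  "LB p1 p2 e4 e5 y3 k = lin (mk p1 p2 0 0 0) (mk (if p1 = 0 then - k / p2 else 0) (if p1 = 0 then 0 else k / p1) y3 e4 e5)"

lemma B_normal:
  assumes p: "\<not> (p1 = 0 \<and> p2 = 0)" and w: "w$3 = e4" "w$4 = e5"
  shows "lin (mk p1 p2 0 0 0) w = LB p1 p2 e4 e5 (w$2) (phi p1 p2 w)"
  unfolding LB_def by (rule lin_p_norm[OF p]) (use w phi_yk[OF p] in simp_all)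

lemma B_range:
  assumes p: "\<not> (p1 = 0 \<and> p2 = 0)" and e: "\<not> (e4 = 0 \<and> e5 = 0)"
  shows "Bset e4 e5 p1 p2 = (\<lambda>(y3,k). LB p1 p2 e4 e5 y3 k) ` UNIV"
proof
  show "Bset e4 e5 p1 p2 \<subseteq> (\<lambda>(y3,k). LB p1 p2 e4 e5 y3 k) ` UNIV"
  proof
    fix L assume "L \<in> Bset e4 e5 p1 p2"
    then obtain w where "w$3 = e4" "w$4 = e5" "L = lin (mk p1 p2 0 0 0) w" using B_char[OF p e] by blast
    then show "L \<in> (\<lambda>(y3,k). LB p1 p2 e4 e5 y3 k) ` UNIV" using B_normal[OF p] by auto
  qed
next
  show "(\<lambda>(y3,k). LB p1 p2 e4 e5 y3 k) ` UNIV \<subseteq> Bset e4 e5 p1 p2"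
    unfolding LB_def using B_intro[OF p e] by auto
qed

lemma B_card:
  assumes p: "\<not> (p1 = 0 \<and> p2 = 0)" and e: "\<not> (e4 = 0 \<and> e5 = 0)"
  shows "card (Bset e4 e5 p1 p2 :: ('a::{field,finite}^5) set set) = CARD('a)^2"
proof -
  have "inj (\<lambda>(y3,k). LB p1 p2 e4 e5 y3 k :: ('a^5) set)"
  proof (rule injI, clarsimp)
    fix y3 k y3' k' :: 'a assume h: "LB p1 p2 e4 e5 y3 k = LB p1 p2 e4 e5 y3' k'"
    obtain j :: 5 where j: "j = 3 \<or> j = 4" "(mk (if p1 = 0 then - k / p2 else 0) (if p1 = 0 then 0 else k / p1) y3 e4 e5)$j \<noteq> 0"
    proof (cases "e4 = 0")
      case True
      then show ?thesis using e by (intro that[of 4]) simp_all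
    next
      case False
      then show ?thesis by (intro that[of 3]) simp_all
    qed
    have jj: "(mk (if p1 = 0 then - k / p2 else 0) (if p1 = 0 then 0 else k / p1) y3 e4 e5)$j =
       (mk (if p1 = 0 then - k' / p2 else 0) (if p1 = 0 then 0 else k' / p1) y3' e4 e5)$j"
      using j(1) by auto
    from lin_p_inj[OF h[unfolded LB_def] _ jj j(2)] j(1) have
      "y3' = y3" "phi p1 p2 (mk (if p1 = 0 then - k' / p2 else 0) (if p1 = 0 then 0 else k' / p1) y3' e4 e5) =
       phi p1 p2 (mk (if p1 = 0 then - k / p2 else 0) (if p1 = 0 then 0 else k / p1) y3 e4 e5)" by auto
    then show "y3 = y3' \<and> k = k'" using phi_yk[OF p] by simp
  qed
  then show ?thesis unfolding B_range[OF p e]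
    by (simp add: card_image UNIV_Times_UNIV[symmetric] card_cartesian_product power2_eq_square del: UNIV_Times_UNIV)
qed

context ctx begin

lemma B_step1:
  assumes e: "\<not> (e4 = 0 \<and> e5 = 0)" and w: "w$3 = e4" "w$4 = e5"
  shows "\<exists>r s. (gm a b c r s 0 w)$2 = y"
proof (cases "e4 = 0")
  case True
  then have e5: "e5 \<noteq> 0" using e by simp
  have "(gm a b c 0 ((y - w$2) / (2 * e5)) 0 w)$2 = y" using w True e5 two by (simp add: gm_def field_simps)
  then show ?thesis by blast
next
  case False
  have "(gm a b c ((y - w$2) / (2 * e4)) 0 0 w)$2 = y" using w False two by (simp add: gm_def field_simps)
  then show ?thesis by blast
qed

lemma phi_gm_t: "w$3 = e4 \<Longrightarrow> w$4 = e5 \<Longrightarrow>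
   phi p1 p2 (gm a b c 0 0 t w) = phi p1 p2 w - t * (p1 * e4 + p2 * e5)"
  unfolding phi_def gm_def by (simp add: algebra_simps)

lemma phi_gm_u: "w$3 = e4 \<Longrightarrow> w$4 = e5 \<Longrightarrow>
   phi p1 p2 (gm a b c (u * e5) (- u * e4) 0 w) = phi p1 p2 w - u * w$2 * (p1 * e4 + p2 * e5)
     + u * (p2 * (a * e4 * e5 + e4^2) - p1 * (b * e4 * e5 + c * e5^2)) - u^2 * e4 * e5 * (p1 * e4 + p2 * e5)"
  unfolding phi_def gm_def by (simp add: algebra_simps power2_eq_square)

lemma B_step2:
  assumes p: "\<not> (p1 = 0 \<and> p2 = 0)" and e: "\<not> (e4 = 0 \<and> e5 = 0)" and w: "w$3 = e4" "w$4 = e5"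
  shows "\<exists>r s t. (gm a b c r s t w)$2 = w$2 \<and> phi p1 p2 (gm a b c r s t w) = f"
proof (cases "p1 * e4 + p2 * e5 = 0")
  case False
  define t where "t = (phi p1 p2 w - f) / (p1 * e4 + p2 * e5)"
  have "phi p1 p2 (gm a b c 0 0 t w) = f" unfolding phi_gm_t[OF w] t_def using False by simp
  moreover have "(gm a b c 0 0 t w)$2 = w$2" by (simp add: gm_def)
  ultimately show ?thesis by blast
next
  case True
  define K where "K = p2 * (a * e4 * e5 + e4^2) - p1 * (b * e4 * e5 + c * e5^2)"
  have K: "K \<noteq> 0"
  proof
    assume K0: "K = 0"
    have h1: "e5 * K = (p1 * e4 + p2 * e5) * (a * e4 * e5 + e4^2) - p1 * (e4^3 + a * e4^2 * e5 + b * e4 * e5^2 + c * e5^3)"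
      unfolding K_def by algebra
    have h2: "e4 * K = p2 * (e4^3 + a * e4^2 * e5 + b * e4 * e5^2 + c * e5^3) - (p1 * e4 + p2 * e5) * (b * e4 * e5 + c * e5^2)"
      unfolding K_def by algebra
    have "p1 * (e4^3 + a * e4^2 * e5 + b * e4 * e5^2 + c * e5^3) = 0" using h1 K0 True by simp
    moreover have "p2 * (e4^3 + a * e4^2 * e5 + b * e4 * e5^2 + c * e5^3) = 0" using h2 K0 True by simp
    ultimately have "e4^3 + a * e4^2 * e5 + b * e4 * e5^2 + c * e5^3 = 0" using p by auto
    then show False using cub e by blast
  qed
  define u where "u = (f - phi p1 p2 w) / K"
  have "phi p1 p2 (gm a b c (u * e5) (- u * e4) 0 w) = f"
    unfolding phi_gm_u[OF w] True using K unfolding K_def[symmetric] u_def by simp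
  moreover have "(gm a b c (u * e5) (- u * e4) 0 w)$2 = w$2" using w by (simp add: gm_def algebra_simps)
  ultimately show ?thesis by blast
qed

lemma B_orbit:
  assumes p: "\<not> (p1 = 0 \<and> p2 = 0)" and e: "\<not> (e4 = 0 \<and> e5 = 0)" and L: "L \<in> Bset e4 e5 p1 p2"
  shows "Orb L = Bset e4 e5 p1 p2"
proof -
  obtain w where w: "w$3 = e4" "w$4 = e5" and Lw: "L = lin (mk p1 p2 0 0 0) w"
    using B_char[OF p e L] by blast
  show ?thesis
  proof
    show "Orb L \<subseteq> Bset e4 e5 p1 p2"
    proof
      fix L' assume "L' \<in> Orb L"
      then obtain r s t where "L' = lin (mk p1 p2 0 0 0) (gm a b c r s t w)"
        unfolding Lw orbit_lin_p by blast
      moreover have "(gm a b c r s t w)$3 = e4" "(gm a b c r s t w)$4 = e5"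
        using w by (simp_all add: gm_def)
      ultimately show "L' \<in> Bset e4 e5 p1 p2" using B_intro[OF p e] by simp
    qed
  next
    show "Bset e4 e5 p1 p2 \<subseteq> Orb L"
    proof
      fix L' assume "L' \<in> Bset e4 e5 p1 p2"
      then obtain w' where w': "w'$3 = e4" "w'$4 = e5" and Lw': "L' = lin (mk p1 p2 0 0 0) w'"
        using B_char[OF p e] by blast
      obtain r1 s1 where g1: "(gm a b c r1 s1 0 w)$2 = w'$2" using B_step1[OF e w] by blast
      define w1 where "w1 = gm a b c r1 s1 0 w"
      have w1: "w1$3 = e4" "w1$4 = e5" using w unfolding w1_def by (simp_all add: gm_def)
      obtain r2 s2 t2 where g2: "(gm a b c r2 s2 t2 w1)$2 = w1$2" "phi p1 p2 (gm a b c r2 s2 t2 w1) = phi p1 p2 w'"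
        using B_step2[OF p e w1] by blast
      define w2 where "w2 = gm a b c r2 s2 t2 w1"
      have w2: "w2$2 = w'$2" "w2$3 = w'$3" "w2$4 = w'$4" "phi p1 p2 w2 = phi p1 p2 w'"
        using g1 g2 w1 w' unfolding w2_def w1_def by (simp_all add: gm_def)
      have "L' = lin (mk p1 p2 0 0 0) w2" unfolding Lw' by (rule lin_p_norm[OF p]) (use w2 in simp_all)
      also have "w2 = gm a b c (r2 + r1) (s2 + s1) (t2 + 0 + 2 * r2 * s1) w"
        unfolding w2_def w1_def gm_comp ..
      finally show "L' \<in> Orb L" unfolding Lw orbit_lin_p by blast
    qed
  qed
qed

end

lemma card_ge2: "CARD('a::{field,finite}) \<ge> 2"
proof -
  have "card {0, 1::'a} \<le> CARD('a)" by (rule card_mono) simp_all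
  then show ?thesis by simp
qed

lemma of_nat_card_zero: "of_nat CARD('a::{field,finite}) = (0::'a)"
proof -
  have bij: "bij_betw (\<lambda>x::'a. x + 1) UNIV UNIV"
    by (rule bij_betwI[of _ _ _ "\<lambda>x. x - 1"]) auto
  have "(\<Sum>x\<in>UNIV. x + 1) = (\<Sum>x\<in>(UNIV::'a set). x)"
    using sum.reindex_bij_betw[OF bij, of "\<lambda>x. x"] by simp
  moreover have "(\<Sum>x\<in>UNIV. x + 1) = (\<Sum>x\<in>(UNIV::'a set). x) + of_nat CARD('a)"
    by (simp add: sum.distrib)
  ultimately show ?thesis by simp
qed

lemma two_nz: "odd CARD('a::{field,finite}) \<Longrightarrow> (2::'a) \<noteq> 0"
proof
  assume o: "odd CARD('a)" and t: "(2::'a) = 0"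
  obtain m where m: "CARD('a) = 2 * m + 1" using o oddE by blast
  have "(of_nat CARD('a) :: 'a) = 2 * of_nat m + 1" unfolding m by simp
  also have "\<dots> = 1" using t by simp
  finally show False using of_nat_card_zero[where 'a='a] by simp
qed

lemma pow_card: "(x::'a::{field,finite}) \<noteq> 0 \<Longrightarrow> x ^ (CARD('a) - 1) = 1"
proof -
  assume x: "x \<noteq> 0"
  let ?N = "UNIV - {0::'a}"
  have bij: "bij_betw (\<lambda>y. x * y) ?N ?N"
    by (rule bij_betwI[of _ _ _ "\<lambda>y. y / x"]) (use x in auto)
  have "(\<Prod>y\<in>?N. x * y) = (\<Prod>y\<in>?N. y)"
    using prod.reindex_bij_betw[OF bij, of "\<lambda>y. y"] by simp
  moreover have "(\<Prod>y\<in>?N. x * y) = x ^ card ?N * (\<Prod>y\<in>?N. y)"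
    by (simp add: prod.distrib)
  moreover have "(\<Prod>y\<in>?N. y) \<noteq> 0" by simp
  moreover have "card ?N = CARD('a) - 1" by (simp add: card_Diff_subset)
  ultimately show ?thesis by simp
qed

lemma prim_props:
  fixes \<omega> :: "'a::{field,finite}"
  assumes prim: "primitive_element \<omega>"
  shows "\<omega> \<noteq> 0" "\<And>x. x \<noteq> 0 \<Longrightarrow> \<exists>k < CARD('a) - 1. x = \<omega> ^ k"
    "inj_on (\<lambda>k. \<omega> ^ k) {..< CARD('a) - 1}"
proof -
  have P: "{\<omega> ^ k | k. True} = UNIV - {0}" using prim unfolding primitive_element_def .
  have "\<omega> ^ 1 \<in> {\<omega> ^ k | k. True}" by blast
  then show w0: "\<omega> \<noteq> 0" using P by auto
  have q1: "CARD('a) - 1 > 0" using card_ge2[where 'a='a] by simp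
  have pw: "\<omega> ^ k = \<omega> ^ (k mod (CARD('a) - 1))" for k
  proof -
    have "\<omega> ^ k = \<omega> ^ ((CARD('a) - 1) * (k div (CARD('a) - 1)) + k mod (CARD('a) - 1))" by simp
    also have "\<dots> = (\<omega> ^ (CARD('a) - 1)) ^ (k div (CARD('a) - 1)) * \<omega> ^ (k mod (CARD('a) - 1))"
      by (simp only: power_add power_mult)
    also have "\<dots> = \<omega> ^ (k mod (CARD('a) - 1))" using pow_card[OF w0] by simp
    finally show ?thesis .
  qed
  have img: "(\<lambda>k. \<omega> ^ k) ` {..< CARD('a) - 1} = UNIV - {0}"
  proof
    show "(\<lambda>k. \<omega> ^ k) ` {..< CARD('a) - 1} \<subseteq> UNIV - {0}" using w0 by auto
    show "UNIV - {0} \<subseteq> (\<lambda>k. \<omega> ^ k) ` {..< CARD('a) - 1}"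
    proof
      fix x assume "x \<in> UNIV - {0::'a}"
      then obtain k where "x = \<omega> ^ k" using P by blast
      then have "x = \<omega> ^ (k mod (CARD('a) - 1))" using pw by simp
      moreover have "k mod (CARD('a) - 1) < CARD('a) - 1" using q1 by simp
      ultimately show "x \<in> (\<lambda>k. \<omega> ^ k) ` {..< CARD('a) - 1}" by blast
    qed
  qed
  show "\<And>x. x \<noteq> 0 \<Longrightarrow> \<exists>k < CARD('a) - 1. x = \<omega> ^ k"
  proof -
    fix x :: 'a assume "x \<noteq> 0"
    then have "x \<in> (\<lambda>k. \<omega> ^ k) ` {..< CARD('a) - 1}" using img by simp
    then show "\<exists>k < CARD('a) - 1. x = \<omega> ^ k" by auto
  qed
  have "card ((\<lambda>k. \<omega> ^ k) ` {..< CARD('a) - 1}) = card {..< CARD('a) - 1}"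
    unfolding img by (simp add: card_Diff_subset)
  then show "inj_on (\<lambda>k. \<omega> ^ k) {..< CARD('a) - 1}" by (rule eq_card_imp_inj_on[rotated]) simp
qed

lemma cub_irr:
  fixes a b c :: "'a::field"
  assumes irr: "irreducible [:c, b, a, 1:]" and h: "x^3 + a * x^2 * y + b * x * y^2 + c * y^3 = 0"
  shows "x = 0 \<and> y = 0"
proof (cases "y = 0")
  case True
  then show ?thesis using h by simp
next
  case False
  define \<mu> where "\<mu> = x / y"
  have "poly [:c, b, a, 1:] \<mu> = (x^3 + a * x^2 * y + b * x * y^2 + c * y^3) / y^3"
    unfolding \<mu>_def using False by (simp add: field_simps power2_eq_square power3_eq_cube)
  then have "poly [:c, b, a, 1:] \<mu> = 0" using h by simp
  then obtain q where q: "[:c, b, a, 1:] = [:- \<mu>, 1:] * q" using poly_eq_0_iff_dvd by (metis dvdE)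
  have nz: "[:c, b, a, 1:] \<noteq> 0" by simp
  then have q0: "q \<noteq> 0" using q by auto
  have "degree [:c, b, a, 1:] = 3" by simp
  then have "degree q = 2" using q degree_mult_eq[of "[:- \<mu>, 1:]" q] q0 by simp
  then have "\<not> is_unit q" using is_unit_iff_degree[OF q0] by simp
  moreover have "\<not> is_unit [:- \<mu>, 1:]" using is_unit_iff_degree[of "[:- \<mu>, 1:]"] by simp
  ultimately show ?thesis using irreducibleD[OF irr q] by simp
qed

definition Pset :: "('a::field^5) set set" where
  "Pset = {P. pg_point P \<and> P \<subseteq> ellL}"

lemma lin1_smult_mem: "x \<in> lin1 p \<Longrightarrow> k *s x \<in> lin1 p"
  unfolding in_lin1 by (auto simp: vector_smult_assoc)

lemma lin1_scale: "k \<noteq> 0 \<Longrightarrow> lin1 (k *s p) = lin1 (p::'a::field^5)"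
proof
  assume k: "k \<noteq> 0"
  show "lin1 (k *s p) \<subseteq> lin1 p" unfolding lin1_def by (auto simp: vector_smult_assoc)
  show "lin1 p \<subseteq> lin1 (k *s p)"
  proof
    fix x assume "x \<in> lin1 p"
    then obtain \<alpha> where "x = \<alpha> *s p" unfolding in_lin1 by blast
    then have "x = (\<alpha> / k) *s (k *s p)" using k by (simp add: vector_smult_assoc)
    then show "x \<in> lin1 (k *s p)" unfolding in_lin1 by blast
  qed
qed

lemma P_char:
  assumes "P \<in> Pset"
  shows "\<exists>p1 p2. \<not> (p1 = 0 \<and> p2 = 0) \<and> P = lin1 (mk p1 p2 0 0 (0::'a::field))"
proof -
  have pP: "pg_point P" and Pl: "P \<subseteq> ellL" using assms unfolding Pset_def by auto
  obtain p where p: "p \<noteq> 0" "P = lin1 p" using pP unfolding point_iff by blast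
  have "p \<in> ellL" using Pl p(2) lin1_mem(1) by blast
  then have "p = mk (p$0) (p$1) 0 0 0" unfolding ellL_def' vec5_eq by simp
  moreover have "\<not> (p$0 = 0 \<and> p$1 = 0)" using p(1) \<open>p \<in> ellL\<close> unfolding ellL_def' vec5_eq by auto
  ultimately show ?thesis using p(2) by metis
qed

lemma P_intro:
  assumes "\<not> (p1 = 0 \<and> p2 = 0)"
  shows "lin1 (mk p1 p2 0 0 (0::'a::field)) \<in> Pset"
proof -
  have "pg_point (lin1 (mk p1 p2 0 0 (0::'a)))" by (rule point_ln1) (use assms in simp)
  moreover have "lin1 (mk p1 p2 0 0 (0::'a)) \<subseteq> ellL" unfolding lin1_def ellL_def' by auto
  ultimately show ?thesis unfolding Pset_def by simp
qed

definition pt :: "'a::field option \<Rightarrow> ('a^5) set" where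
  "pt x = (case x of None \<Rightarrow> lin1 (mk 0 1 0 0 0) | Some l \<Rightarrow> lin1 (mk 1 l 0 0 0))"

lemma P_range: "Pset = range (pt :: 'a::field option \<Rightarrow> _)"
proof
  show "Pset \<subseteq> range (pt :: 'a::field option \<Rightarrow> _)"
  proof
    fix P :: "('a^5) set" assume "P \<in> Pset"
    then obtain p1 p2 where p: "\<not> (p1 = 0 \<and> p2 = 0)" "P = lin1 (mk p1 p2 0 0 0)" using P_char by blast
    show "P \<in> range pt"
    proof (cases "p1 = 0")
      case True
      then have "mk p1 p2 0 0 0 = p2 *s mk 0 1 0 0 (0::'a)" by simp
      then have "P = pt None" using p True lin1_scale[of p2 "mk 0 1 0 0 0"] by (simp add: pt_def)
      then show ?thesis by blast
    next
      case False
      then have "mk p1 p2 0 0 0 = p1 *s mk 1 (p2 / p1) 0 0 (0::'a)" by simp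
      then have "P = pt (Some (p2 / p1))" using p False lin1_scale[of p1 "mk 1 (p2/p1) 0 0 0"] by (simp add: pt_def)
      then show ?thesis by blast
    qed
  qed
next
  show "range pt \<subseteq> (Pset :: ('a^5) set set)"
  proof
    fix P :: "('a^5) set" assume "P \<in> range pt"
    then obtain x where "P = pt x" by blast
    then show "P \<in> Pset"
    proof (cases x)
      case None
      then show ?thesis using \<open>P = pt x\<close> P_intro[of 0 1] by (simp add: pt_def)
    next
      case (Some l)
      then show ?thesis using \<open>P = pt x\<close> P_intro[of 1 l] by (simp add: pt_def)
    qed
  qed
qed

lemma pt_inj: "inj (pt :: 'a::field option \<Rightarrow> _)"
proof (rule injI)
  fix x y :: "'a option" assume h: "pt x = pt y"
  have mem: "\<And>u v :: 'a^5. lin1 u = lin1 v \<Longrightarrow> \<exists>\<alpha>. u = \<alpha> *s v"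
  proof -
    fix u v :: "'a^5" assume "lin1 u = lin1 v"
    then have "u \<in> lin1 v" using lin1_mem(1)[of u] by simp
    then show "\<exists>\<alpha>. u = \<alpha> *s v" unfolding in_lin1 .
  qed
  show "x = y"
  proof (cases x)
    case None
    then show ?thesis
    proof (cases y)
      case (Some l)
      then have "lin1 (mk 0 1 0 0 0) = lin1 (mk 1 l 0 0 (0::'a))" using h None by (simp add: pt_def)
      then obtain \<alpha> where "mk 0 1 0 0 0 = \<alpha> *s mk 1 l 0 0 (0::'a)" using mem by blast
      then show ?thesis by auto
    qed simp
  next
    case (Some l)
    then show ?thesis
    proof (cases y)
      case None
      then have "lin1 (mk 1 l 0 0 0) = lin1 (mk 0 1 0 0 (0::'a))" using h Some by (simp add: pt_def)
      then obtain \<alpha> where "mk 1 l 0 0 0 = \<alpha> *s mk 0 1 0 0 (0::'a)" using mem by blast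
      then show ?thesis by auto
    next
      case (Some l')
      then have "lin1 (mk 1 l 0 0 0) = lin1 (mk 1 l' 0 0 (0::'a))" using h \<open>x = Some l\<close> by (simp add: pt_def)
      then obtain \<alpha> where "mk 1 l 0 0 0 = \<alpha> *s mk 1 l' 0 0 (0::'a)" using mem by blast
      then show ?thesis using \<open>x = Some l\<close> Some by simp
    qed
  qed
qed

lemma P_card: "card (Pset :: ('a::{field,finite}^5) set set) = CARD('a) + 1"
  unfolding P_range by (simp add: card_image pt_inj)

lemma two_points:
  assumes P: "P \<in> Pset" and P': "P' \<in> Pset" and ne: "P \<noteq> P'" and L: "pg_line L"
    and sub: "P \<subseteq> L" "P' \<subseteq> L"
  shows "L = ellL"
proof -
  obtain p where p: "p \<noteq> 0" "P = lin1 p" using P unfolding Pset_def point_iff by blast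
  obtain p' where p': "p' \<noteq> 0" "P' = lin1 p'" using P' unfolding Pset_def point_iff by blast
  have ind: "ind p p'" unfolding ind_def
  proof (intro allI impI)
    fix \<alpha> \<beta> assume h: "\<alpha> *s p + \<beta> *s p' = 0"
    have a: "\<alpha> = 0"
    proof (rule ccontr)
      assume a: "\<alpha> \<noteq> 0"
      then have pe: "p = (- \<beta> / \<alpha>) *s p'" using smult_solve[OF h] by simp
      then have "- \<beta> / \<alpha> \<noteq> 0" using p(1) by auto
      then have "lin1 p = lin1 p'" using pe lin1_scale by metis
      then show False using ne p(2) p'(2) by simp
    qed
    then have "\<beta> *s p' = 0" using h by simp
    then show "\<alpha> = 0 \<and> \<beta> = 0" using a p'(1) by simp
  qed
  have inL: "p \<in> L" "p' \<in> L" using sub p(2) p'(2) lin1_mem(1) by blast+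
  have inl: "p \<in> ellL" "p' \<in> ellL" using P P' p(2) p'(2) lin1_mem(1) unfolding Pset_def by blast+
  have "L = lin p p'" using line_eq[OF L ind inL] .
  moreover have "ellL = lin p p'" using line_eq[OF ell_line ind inl] .
  ultimately show ?thesis by simp
qed

definition E4 :: "'a::{field,finite} \<Rightarrow> nat \<Rightarrow> 'a" where
  "E4 \<omega> i = (if i \<le> CARD('a) - 1 then \<omega> ^ (i - 1) else if i = CARD('a) then 0 else 1)"
definition E5 :: "'a::{field,finite} \<Rightarrow> nat \<Rightarrow> 'a" where
  "E5 \<omega> i = (if i \<le> CARD('a) - 1 then 1 else if i = CARD('a) then 1 else 0)"

lemma Solid_sol: "i \<in> {1..CARD('a) + 1} \<Longrightarrow> Solid \<omega> i = sol (E4 \<omega> i) (E5 \<omega> (i::nat) :: 'a::{field,finite})"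
  using card_ge2[where 'a='a]
  by (auto simp: Solid_def sol_def E4_def E5_def)

lemma E_nz: "\<not> (E4 \<omega> i = 0 \<and> E5 \<omega> i = 0)"
  by (auto simp: E4_def E5_def)

lemma E_indep:
  fixes \<omega> :: "'a::{field,finite}"
  assumes prim: "primitive_element \<omega>" and i: "i \<in> {1..CARD('a) + 1}" and j: "j \<in> {1..CARD('a) + 1}" and ij: "i \<noteq> j"
  shows "E4 \<omega> i * E5 \<omega> j \<noteq> E5 \<omega> i * E4 \<omega> j"
proof -
  note pp = prim_props[OF prim]
  have q2: "CARD('a) \<ge> 2" by (rule card_ge2)
  show ?thesis
  proof (cases "i \<le> CARD('a) - 1 \<and> j \<le> CARD('a) - 1")
    case True
    then have "i - 1 \<in> {..< CARD('a) - 1}" "j - 1 \<in> {..< CARD('a) - 1}" "i - 1 \<noteq> j - 1" using i j ij by auto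
    then have "\<omega> ^ (i - 1) \<noteq> \<omega> ^ (j - 1)" using pp(3) unfolding inj_on_def by blast
    then show ?thesis using True by (simp add: E4_def E5_def)
  next
    case False
    then show ?thesis using i j ij pp(1) q2 by (auto simp: E4_def E5_def)
  qed
qed

lemma E_cover:
  fixes \<omega> :: "'a::{field,finite}"
  assumes prim: "primitive_element \<omega>" and z: "\<not> (z3 = 0 \<and> z4 = 0)"
  shows "\<exists>i\<in>{1..CARD('a) + 1}. E5 \<omega> i * z3 = E4 \<omega> i * z4"
proof -
  note pp = prim_props[OF prim]
  have q2: "CARD('a) \<ge> 2" by (rule card_ge2)
  show ?thesis
  proof (cases "z4 = 0")
    case True
    have "E5 \<omega> (CARD('a) + 1) * z3 = E4 \<omega> (CARD('a) + 1) * z4" using True q2 by (simp add: E4_def E5_def)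
    then show ?thesis by force
  next
    case False
    show ?thesis
    proof (cases "z3 = 0")
      case True
      have "E5 \<omega> (CARD('a)) * z3 = E4 \<omega> (CARD('a)) * z4" using True q2 by (simp add: E4_def E5_def)
      then show ?thesis using q2 by force
    next
      case z3: False
      then have "z3 / z4 \<noteq> 0" using False by simp
      then obtain k where k: "k < CARD('a) - 1" "z3 / z4 = \<omega> ^ k" using pp(2) by blast
      have "E5 \<omega> (k + 1) * z3 = E4 \<omega> (k + 1) * z4" using k False by (simp add: E4_def E5_def field_simps)
      moreover have "k + 1 \<in> {1..CARD('a) + 1}" using k by simp
      ultimately show ?thesis by blast
    qed
  qed
qed

lemma sol_inter:
  assumes d: "e4 * f5 \<noteq> e5 * f4" and v: "v \<in> sol e4 e5" "v \<in> sol f4 f5"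
  shows "v \<in> piP"
proof -
  have h1: "e5 * v$3 = e4 * v$4" and h2: "f5 * v$3 = f4 * v$4" using v unfolding sol_def by auto
  have "(e4 * f5 - e5 * f4) * v$3 = e4 * (f5 * v$3) - f4 * (e5 * v$3)" by (simp add: algebra_simps)
  also have "\<dots> = 0" unfolding h1 h2 by (simp add: algebra_simps)
  finally have 3: "v$3 = 0" using d by simp
  have "(e4 * f5 - e5 * f4) * v$4 = f5 * (e4 * v$4) - e5 * (f4 * v$4)" by (simp add: algebra_simps)
  also have "\<dots> = 0" unfolding h1[symmetric] h2[symmetric] by (simp add: algebra_simps)
  finally have 4: "v$4 = 0" using d by simp
  show ?thesis using 3 4 unfolding piP_def' by simp
qed

lemma classify:
  fixes \<omega> :: "'a::{field,finite}"
  assumes prim: "primitive_element \<omega>" and lL: "pg_line L" and ne: "L \<noteq> ellL"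
  shows "(\<exists>p1 p2. \<not> (p1 = 0 \<and> p2 = 0) \<and> L \<in> Aset p1 p2) \<or>
    (\<exists>i\<in>{1..CARD('a)+1}. \<exists>p1 p2. \<not> (p1 = 0 \<and> p2 = 0) \<and> L \<in> Bset (E4 \<omega> i) (E5 \<omega> i) p1 p2) \<or>
    (\<exists>i\<in>{1..CARD('a)+1}. L \<in> Cset (E4 \<omega> i) (E5 \<omega> i)) \<or> L \<in> Dset"
proof (cases "L \<inter> piP = {0}")
  case True
  then show ?thesis using lL unfolding Dset_def by simp
next
  case False
  obtain u v where uv: "ind u v" "L = lin u v" using lL unfolding line_iff by blast
  have "0 \<in> L \<inter> piP" unfolding uv(2) piP_def' by simp
  then obtain w where wL: "w \<in> L" and wp: "w \<in> piP" and w0: "w \<noteq> 0" using False by blast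
  have w34: "w$3 = 0" "w$4 = 0" using wp unfolding piP_def' by auto
  show ?thesis
  proof (cases "L \<subseteq> piP")
    case True
    have up: "u \<in> piP" "v \<in> piP" using True uv(2) by auto
    obtain p where pL: "p \<in> L" and p0: "p \<noteq> 0" and p2: "p$2 = 0" and pp: "p \<in> piP"
    proof (cases "u$2 = 0 \<and> v$2 = 0")
      case True
      have "u \<noteq> 0" using ind_nonzero[OF uv(1), of 1 0] by simp
      then show ?thesis using that[of u] True up uv(2) by simp
    next
      case False
      let ?p = "u$2 *s v + (- v$2) *s u"
      have "?p \<noteq> 0"
      proof -
        have "(- v$2) *s u + u$2 *s v \<noteq> 0" by (rule ind_nonzero[OF uv(1)]) (use False in auto)
        then show ?thesis by (simp add: add.commute)
      qed
      moreover have "?p \<in> L" unfolding uv(2) using lin_comb_mem[of v u v u "u$2" "- v$2"] by simp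
      moreover have "?p$2 = 0" by (simp add: algebra_simps)
      moreover have "?p \<in> piP" using up unfolding piP_def' by simp
      ultimately show ?thesis using that by blast
    qed
    have pe: "p = mk (p$0) (p$1) 0 0 0" using p2 pp unfolding piP_def' vec5_eq by simp
    have pnz: "\<not> (p$0 = 0 \<and> p$1 = 0)" using p0 p2 pp unfolding piP_def' vec5_eq by auto
    have "lin1 p \<subseteq> L"
    proof
      fix x assume "x \<in> lin1 p"
      then obtain \<alpha> where "x = \<alpha> *s p" unfolding in_lin1 by blast
      then show "x \<in> L" using lin_smult_mem[of p u v \<alpha>] pL uv(2) by simp
    qed
    then have "lin1 (mk (p$0) (p$1) 0 0 0) \<subseteq> L" by (subst pe[symmetric])
    then have "L \<in> Aset (p$0) (p$1)" unfolding Aset_def using lL True ne by simp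
    then show ?thesis using pnz by blast
  next
    case np: False
    then obtain z where zL: "z \<in> L" and zp: "z \<notin> piP" by blast
    have z34: "\<not> (z$3 = 0 \<and> z$4 = 0)" using zp unfolding piP_def' by simp
    have ind: "ind w z" by (rule ind_pi) (use w34 w0 z34 in simp_all)
    have Lwz: "L = lin w z" using line_eq[OF lL ind wL zL] .
    obtain i where i: "i \<in> {1..CARD('a)+1}" and iz: "E5 \<omega> i * z$3 = E4 \<omega> i * z$4"
      using E_cover[OF prim z34] by blast
    have Ls: "L \<subseteq> sol (E4 \<omega> i) (E5 \<omega> i)"
    proof
      fix x assume "x \<in> L"
      then obtain \<alpha> \<beta> where "x = \<alpha> *s w + \<beta> *s z" unfolding Lwz in_lin by blast
      then have "x$3 = \<beta> * z$3" "x$4 = \<beta> * z$4" using w34 by simp_all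
      then show "x \<in> sol (E4 \<omega> i) (E5 \<omega> i)" unfolding sol_def using iz
        by (simp add: algebra_simps)
    qed
    show ?thesis
    proof (cases "w$2 = 0")
      case True
      have we: "w = mk (w$0) (w$1) 0 0 0" using True w34 unfolding vec5_eq by simp
      have wnz: "\<not> (w$0 = 0 \<and> w$1 = 0)" using w0 True w34 unfolding vec5_eq by auto
      have "lin1 w \<subseteq> L"
      proof
        fix x assume "x \<in> lin1 w"
        then obtain \<alpha> where "x = \<alpha> *s w" unfolding in_lin1 by blast
        then show "x \<in> L" using lin_smult_mem[of w w z \<alpha>] Lwz by simp
      qed
      then have "lin1 (mk (w$0) (w$1) 0 0 0) \<subseteq> L" by (subst we[symmetric])
      then have "L \<in> Bset (E4 \<omega> i) (E5 \<omega> i) (w$0) (w$1)" unfolding Bset_def using lL Ls np by simp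
      then show ?thesis using wnz i by blast
    next
      case w2: False
      have Ll: "L \<inter> ellL = {0}"
      proof
        show "L \<inter> ellL \<subseteq> {0}"
        proof
          fix x assume "x \<in> L \<inter> ellL"
          then have xL: "x \<in> L" and xl: "x$2 = 0" "x$3 = 0" "x$4 = 0" unfolding ellL_def' by auto
          then obtain \<alpha> \<beta> where x: "x = \<alpha> *s w + \<beta> *s z" unfolding Lwz in_lin by blast
          then have "x$3 = \<beta> * z$3" "x$4 = \<beta> * z$4" "x$2 = \<alpha> * w$2 + \<beta> * z$2" using w34 by simp_all
          then have "\<beta> * z$3 = 0" "\<beta> * z$4 = 0" using xl by simp_all
          then have b: "\<beta> = 0" using z34 by auto
          then have "\<alpha> * w$2 = 0" using xl \<open>x$2 = \<alpha> * w$2 + \<beta> * z$2\<close> by simp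
          then have "\<alpha> = 0" using w2 by simp
          then show "x \<in> {0}" using x b by simp
        qed
      qed (simp add: Lwz ellL_def')
      have Lp: "L \<inter> piP = lin1 w"
      proof
        show "L \<inter> piP \<subseteq> lin1 w"
        proof
          fix x assume "x \<in> L \<inter> piP"
          then have xL: "x \<in> L" and xp: "x$3 = 0" "x$4 = 0" unfolding piP_def' by auto
          then obtain \<alpha> \<beta> where x: "x = \<alpha> *s w + \<beta> *s z" unfolding Lwz in_lin by blast
          then have "x$3 = \<beta> * z$3" "x$4 = \<beta> * z$4" using w34 by simp_all
          then have "\<beta> * z$3 = 0" "\<beta> * z$4 = 0" using xp by simp_all
          then have "\<beta> = 0" using z34 by auto
          then show "x \<in> lin1 w" using x unfolding in_lin1 by simp
        qed
        show "lin1 w \<subseteq> L \<inter> piP"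
        proof
          fix x assume "x \<in> lin1 w"
          then obtain \<alpha> where x: "x = \<alpha> *s w" unfolding in_lin1 by blast
          then have "x \<in> L" using lin_smult_mem[of w w z \<alpha>] Lwz by simp
          moreover have "x \<in> piP" using x w34 unfolding piP_def' by simp
          ultimately show "x \<in> L \<inter> piP" by simp
        qed
      qed
      have "pg_point (L \<inter> piP)" unfolding Lp by (rule point_ln1[OF w0])
      then have "L \<in> Cset (E4 \<omega> i) (E5 \<omega> i)" unfolding Cset_def using lL Ls Ll by simp
      then show ?thesis using i by blast
    qed
  qed
qed

lemma ellL_ne0: "mk 1 0 0 0 0 \<in> (ellL :: ('a::field^5) set)" "mk 1 0 0 0 0 \<noteq> (0::'a::field^5)"
  by (simp_all add: ellL_def')

lemma ellL_sub_pi: "ellL \<subseteq> piP"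
  unfolding ellL_def' piP_def' by auto

lemma Cset_ne_ell: "L \<in> Cset e4 e5 \<Longrightarrow> L \<noteq> ellL"
proof
  assume "L \<in> Cset e4 e5" "L = ellL"
  then have "ellL \<inter> ellL = {0::'a^5}" unfolding Cset_def by simp
  then show False using ellL_ne0 by (metis Int_absorb singletonD)
qed

lemma Dset_ne_ell: "L \<in> Dset \<Longrightarrow> L \<noteq> ellL"
proof
  assume "L \<in> Dset" "L = ellL"
  then have "ellL \<inter> piP = {0::'a^5}" unfolding Dset_def by simp
  then have "ellL = {0::'a^5}" using ellL_sub_pi by (metis inf.absorb_iff1)
  then show False using ellL_ne0 by (metis singletonD)
qed

lemma Bset_ne_ell: "L \<in> Bset e4 e5 p1 p2 \<Longrightarrow> L \<noteq> ellL"
  unfolding Bset_def using ellL_sub_pi by blast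

lemma Cset_disj:
  fixes \<omega> :: "'a::{field,finite}"
  assumes prim: "primitive_element \<omega>" and i: "i \<in> {1..CARD('a)+1}" and j: "j \<in> {1..CARD('a)+1}" and ij: "i \<noteq> j"
    and Li: "L \<in> Cset (E4 \<omega> i) (E5 \<omega> i)" and Lj: "L \<in> Cset (E4 \<omega> j) (E5 \<omega> j)"
  shows False
proof -
  have "L \<subseteq> piP"
  proof
    fix v assume "v \<in> L"
    then show "v \<in> piP" using sol_inter[OF E_indep[OF prim i j ij]] Li Lj unfolding Cset_def by blast
  qed
  then have "L \<inter> piP = L" by blast
  then have "pg_point L" using Li unfolding Cset_def by simp
  moreover have "pg_line L" using Li unfolding Cset_def by simp
  ultimately show False using line_not_point by blast
qed

theorem lemma2p4:
  fixes a b c \<omega> :: "'a::{field,finite}"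
  defines "q \<equiv> CARD('a)"
  assumes q_odd: "odd q"
    and prim: "primitive_element \<omega>"
    and irr: "irreducible [:c, b, a, 1:]"
  defines "Orb \<equiv> G_orbit a b c"
    and "Pts \<equiv> {P. pg_point P \<and> P \<subseteq> ellL}"
    and "A \<equiv> \<lambda>P. {L \<in> pg_lines. L \<subseteq> piP \<and> P \<subseteq> L \<and> L \<noteq> ellL}"
    and "B \<equiv> \<lambda>i P. {L \<in> pg_lines. L \<subseteq> Solid \<omega> i \<and> P \<subseteq> L \<and> \<not> L \<subseteq> piP}"
    and "C \<equiv> \<lambda>i. {L \<in> pg_lines. L \<subseteq> Solid \<omega> i \<and> L \<inter> ellL = {0}
                                  \<and> pg_point (L \<inter> piP)}"
    and "D \<equiv> {L \<in> pg_lines. L \<inter> piP = {0}}"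
  shows "({Orb L | L. L \<in> pg_lines \<and> L \<noteq> ellL} =
       (A ` Pts) \<union> {B i P | i P. i \<in> {1..q+1} \<and> P \<in> Pts}
       \<union> (\<Union>i\<in>{1..q+1}. Orb ` C i) \<union> (Orb ` D)) \<and>
    (\<forall>P\<in>Pts. \<forall>L\<in>A P. Orb L = A P) \<and>
    (\<forall>P\<in>Pts. card (A P) = q) \<and>
    (card (A ` Pts) = q + 1) \<and>
    (\<forall>i\<in>{1..q+1}. \<forall>P\<in>Pts. \<forall>L\<in>B i P. Orb L = B i P) \<and>
    (\<forall>i\<in>{1..q+1}. \<forall>P\<in>Pts. card (B i P) = q^2) \<and>
    (card {B i P | i P. i \<in> {1..q+1} \<and> P \<in> Pts} = (q + 1)^2) \<and>
    (\<forall>i\<in>{1..q+1}. card (Orb ` C i) = q) \<and>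
    (\<forall>i\<in>{1..q+1}. \<forall>L\<in>C i. card (Orb L) = q^3) \<and>
    (card (\<Union>i\<in>{1..q+1}. Orb ` C i) = q * (q + 1)) \<and>
    (card (Orb ` D) = q^3) \<and>
    (\<forall>L\<in>D. card (Orb L) = q^3) \<and>
    (\<Union>(Orb ` D) = D) \<and>
    (\<forall>L\<in>D. \<forall>L1\<in>Orb L. \<forall>L2\<in>Orb L. L1 \<noteq> L2 \<longrightarrow> L1 \<inter> L2 = {0})"
proof -
  have "odd CARD('a)" using q_odd unfolding q_def .
  then have two: "(2::'a) \<noteq> 0" by (rule two_nz)
  have ctx: "ctx a b c"
  proof (rule ctx.intro)
    show "(2::'a) \<noteq> 0" by (rule two)
    fix x y :: 'a assume "x^3 + a * x^2 * y + b * x * y^2 + c * y^3 = 0"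
    then show "x = 0 \<and> y = 0" by (rule cub_irr[OF irr])
  qed
  have Pts: "Pts = Pset" unfolding Pts_def Pset_def by simp
  have Ad: "\<And>p1 p2. A (lin1 (mk p1 p2 0 0 0)) = Aset p1 p2"
    unfolding A_def Aset_def pg_lines_def by simp
  have Bd: "\<And>i p1 p2. i \<in> {1..q+1} \<Longrightarrow> B i (lin1 (mk p1 p2 0 0 0)) = Bset (E4 \<omega> i) (E5 \<omega> i) p1 p2"
    unfolding B_def Bset_def pg_lines_def q_def by (simp add: Solid_sol)
  have Cd: "\<And>i. i \<in> {1..q+1} \<Longrightarrow> C i = Cset (E4 \<omega> i) (E5 \<omega> i)"
    unfolding C_def Cset_def pg_lines_def q_def by (simp add: Solid_sol)
  have Dd: "D = Dset" unfolding D_def Dset_def pg_lines_def by simp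
  have Pc: "\<And>P. P \<in> Pts \<Longrightarrow> \<exists>p1 p2. \<not> (p1 = 0 \<and> p2 = 0) \<and> P = lin1 (mk p1 p2 0 0 0)"
    unfolding Pts using P_char by blast
  note Enz = E_nz[of \<omega>]

  have c2: "\<forall>P\<in>Pts. \<forall>L\<in>A P. Orb L = A P"
  proof (intro ballI)
    fix P L assume P: "P \<in> Pts" and L: "L \<in> A P"
    obtain p1 p2 where p: "\<not> (p1 = 0 \<and> p2 = 0)" "P = lin1 (mk p1 p2 0 0 0)" using Pc[OF P] by blast
    have "L \<in> Aset p1 p2" using L Ad p(2) by simp
    then show "Orb L = A P" unfolding Orb_def using ctx.A_orbit[OF ctx p(1)] Ad p(2) by simp
  qed
  have c3: "\<forall>P\<in>Pts. card (A P) = q"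
  proof
    fix P assume P: "P \<in> Pts"
    obtain p1 p2 where p: "\<not> (p1 = 0 \<and> p2 = 0)" "P = lin1 (mk p1 p2 0 0 0)" using Pc[OF P] by blast
    show "card (A P) = q" unfolding p(2) Ad q_def using A_card[OF p(1)] by simp
  qed
  have Ane: "\<And>P. P \<in> Pts \<Longrightarrow> \<exists>L. L \<in> A P"
  proof -
    fix P assume P: "P \<in> Pts"
    obtain p1 p2 where p: "\<not> (p1 = 0 \<and> p2 = 0)" "P = lin1 (mk p1 p2 0 0 0)" using Pc[OF P] by blast
    have "LA p1 p2 0 \<in> Aset p1 p2" using A_range[OF p(1)] by simp
    then show "\<exists>L. L \<in> A P" using Ad p(2) by blast
  qed
  have c4: "card (A ` Pts) = q + 1"
  proof -
    have "inj_on A Pts"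
    proof (rule inj_onI, rule ccontr)
      fix P P' assume P: "P \<in> Pts" and P': "P' \<in> Pts" and h: "A P = A P'" and ne: "P \<noteq> P'"
      obtain L where L: "L \<in> A P" using Ane[OF P] by blast
      then have L': "L \<in> A P'" using h by simp
      have "L = ellL" using two_points[of P P' L] P P' ne L L' unfolding Pts A_def pg_lines_def Pset_def by auto
      then show False using L unfolding A_def by simp
    qed
    then show ?thesis using card_image P_card[where 'a='a] unfolding Pts q_def by metis
  qed
  have c5: "\<forall>i\<in>{1..q+1}. \<forall>P\<in>Pts. \<forall>L\<in>B i P. Orb L = B i P"
  proof (intro ballI)
    fix i P L assume i: "i \<in> {1..q+1}" and P: "P \<in> Pts" and L: "L \<in> B i P"
    obtain p1 p2 where p: "\<not> (p1 = 0 \<and> p2 = 0)" "P = lin1 (mk p1 p2 0 0 0)" using Pc[OF P] by blast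
    have "L \<in> Bset (E4 \<omega> i) (E5 \<omega> i) p1 p2" using L Bd[OF i] p(2) by simp
    then show "Orb L = B i P" unfolding Orb_def using ctx.B_orbit[OF ctx p(1) Enz] Bd[OF i] p(2) by simp
  qed
  have c6: "\<forall>i\<in>{1..q+1}. \<forall>P\<in>Pts. card (B i P) = q^2"
  proof (intro ballI)
    fix i P assume i: "i \<in> {1..q+1}" and P: "P \<in> Pts"
    obtain p1 p2 where p: "\<not> (p1 = 0 \<and> p2 = 0)" "P = lin1 (mk p1 p2 0 0 0)" using Pc[OF P] by blast
    show "card (B i P) = q^2" unfolding p(2) Bd[OF i] q_def using B_card[OF p(1) Enz] by simp
  qed
  have Bne: "\<And>i P. i \<in> {1..q+1} \<Longrightarrow> P \<in> Pts \<Longrightarrow> \<exists>L. L \<in> B i P"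
  proof -
    fix i P assume i: "i \<in> {1..q+1}" and P: "P \<in> Pts"
    obtain p1 p2 where p: "\<not> (p1 = 0 \<and> p2 = 0)" "P = lin1 (mk p1 p2 0 0 0)" using Pc[OF P] by blast
    have "LB p1 p2 (E4 \<omega> i) (E5 \<omega> i) 0 0 \<in> Bset (E4 \<omega> i) (E5 \<omega> i) p1 p2"
      unfolding B_range[OF p(1) Enz] by (rule image_eqI[of _ _ "(0,0)"]) simp_all
    then show "\<exists>L. L \<in> B i P" using Bd[OF i] p(2) by blast
  qed
  have c7: "card {B i P | i P. i \<in> {1..q+1} \<and> P \<in> Pts} = (q + 1)^2"
  proof -
    have eq: "{B i P | i P. i \<in> {1..q+1} \<and> P \<in> Pts} = (\<lambda>(i,P). B i P) ` ({1..q+1} \<times> Pts)"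
    proof
      show "{B i P | i P. i \<in> {1..q+1} \<and> P \<in> Pts} \<subseteq> (\<lambda>(i,P). B i P) ` ({1..q+1} \<times> Pts)"
      proof
        fix X assume "X \<in> {B i P | i P. i \<in> {1..q+1} \<and> P \<in> Pts}"
        then obtain i P where "X = B i P" "i \<in> {1..q+1}" "P \<in> Pts" by blast
        then show "X \<in> (\<lambda>(i,P). B i P) ` ({1..q+1} \<times> Pts)" by (intro image_eqI[of _ _ "(i,P)"]) simp_all
      qed
    next
      show "(\<lambda>(i,P). B i P) ` ({1..q+1} \<times> Pts) \<subseteq> {B i P | i P. i \<in> {1..q+1} \<and> P \<in> Pts}"
      proof
        fix X assume "X \<in> (\<lambda>(i,P). B i P) ` ({1..q+1} \<times> Pts)"
        then obtain i P where "X = B i P" "i \<in> {1..q+1}" "P \<in> Pts" by auto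
        then show "X \<in> {B i P | i P. i \<in> {1..q+1} \<and> P \<in> Pts}" by blast
      qed
    qed
    have "inj_on (\<lambda>(i,P). B i P) ({1..q+1} \<times> Pts)"
    proof (rule inj_onI)
      fix x y assume x: "x \<in> {1..q+1} \<times> Pts" and y: "y \<in> {1..q+1} \<times> Pts"
        and h0: "(\<lambda>(i,P). B i P) x = (\<lambda>(i,P). B i P) y"
      obtain i P where xe: "x = (i,P)" by (cases x)
      obtain j P' where ye: "y = (j,P')" by (cases y)
      have i: "i \<in> {1..q+1}" and P: "P \<in> Pts" using x xe by auto
      have j: "j \<in> {1..q+1}" and P': "P' \<in> Pts" using y ye by auto
      have h: "B i P = B j P'" using h0 xe ye by simp
      obtain L where L: "L \<in> B i P" using Bne[OF i P] by blast
      then have L': "L \<in> B j P'" using h by simp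
      have Ls: "L \<subseteq> sol (E4 \<omega> i) (E5 \<omega> i)" "L \<subseteq> sol (E4 \<omega> j) (E5 \<omega> j)"
        using L L' Solid_sol[of i \<omega>] Solid_sol[of j \<omega>] i j unfolding B_def q_def by auto
      have np: "\<not> L \<subseteq> piP" using L unfolding B_def by simp
      have ij: "i = j"
      proof (rule ccontr)
        assume "i \<noteq> j"
        then have "L \<subseteq> piP" using sol_inter[OF E_indep[OF prim _ _ \<open>i \<noteq> j\<close>]] i j Ls unfolding q_def by blast
        then show False using np by simp
      qed
      have PP: "P = P'"
      proof (rule ccontr)
        assume "P \<noteq> P'"
        then have "L = ellL" using two_points[of P P' L] P P' L L' unfolding Pts B_def pg_lines_def Pset_def by auto
        then show False using np ellL_sub_pi[where 'a='a] by simp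
      qed
      show "x = y" using ij PP xe ye by simp
    qed
    then have "card {B i P | i P. i \<in> {1..q+1} \<and> P \<in> Pts} = card ({1..q+1} \<times> Pts)"
      unfolding eq by (rule card_image)
    also have "\<dots> = (q + 1) * (q + 1)" using P_card[where 'a='a] unfolding Pts q_def by (simp add: card_cartesian_product)
    finally show ?thesis by (simp add: power2_eq_square)
  qed
  have c8: "\<forall>i\<in>{1..q+1}. card (Orb ` C i) = q"
    unfolding Orb_def q_def using ctx.C_orbits_card[OF ctx Enz] Cd unfolding q_def by simp
  have c9: "\<forall>i\<in>{1..q+1}. \<forall>L\<in>C i. card (Orb L) = q^3"
  proof (intro ballI)
    fix i L assume i: "i \<in> {1..q+1}" and L: "L \<in> C i"
    then obtain x1 x2 y1 y2 where "L = LC (E4 \<omega> i) (E5 \<omega> i) x1 x2 y1 y2" using C_char[OF Enz] Cd by blast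
    then show "card (Orb L) = q^3" unfolding Orb_def q_def using ctx.C_orbit_card[OF ctx Enz] by simp
  qed
  have Csub: "\<And>i L. i \<in> {1..q+1} \<Longrightarrow> L \<in> C i \<Longrightarrow> Orb L \<subseteq> C i"
    unfolding Orb_def using ctx.C_orbit_sub[OF ctx Enz] Cd by simp
  have c10: "card (\<Union>i\<in>{1..q+1}. Orb ` C i) = q * (q + 1)"
  proof -
    have "card (\<Union>i\<in>{1..q+1}. Orb ` C i) = (\<Sum>i\<in>{1..q+1}. card (Orb ` C i))"
    proof (rule card_UN_disjoint)
      show "\<forall>i\<in>{1..q+1}. \<forall>j\<in>{1..q+1}. i \<noteq> j \<longrightarrow> Orb ` C i \<inter> Orb ` C j = {}"
      proof (intro ballI impI)
        fix i j assume i: "i \<in> {1..q+1}" and j: "j \<in> {1..q+1}" and ij: "i \<noteq> j"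
        show "Orb ` C i \<inter> Orb ` C j = {}"
        proof (rule ccontr)
          assume "Orb ` C i \<inter> Orb ` C j \<noteq> {}"
          then obtain L L' where L: "L \<in> C i" and L': "L' \<in> C j" and e: "Orb L = Orb L'" by blast
          have "L \<in> Orb L" unfolding Orb_def by (rule orbit_self)
          then have "L \<in> C j" using Csub[OF j L'] e by blast
          then show False using Cset_disj[OF prim _ _ ij] i j L Cd unfolding q_def by simp
        qed
      qed
    qed simp_all
    also have "\<dots> = (\<Sum>i\<in>{1..q+1}. q)" using c8 by simp
    finally show ?thesis by simp
  qed
  have c11: "card (Orb ` D) = q^3" unfolding Orb_def Dd q_def using ctx.D_orbits_card[OF ctx] .
  have c12: "\<forall>L\<in>D. card (Orb L) = q^3"
  proof
    fix L assume "L \<in> D"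
    then obtain x1 x2 x3 y1 y2 y3 where "L = LD x1 x2 x3 y1 y2 y3" using D_char Dd by blast
    then show "card (Orb L) = q^3" unfolding Orb_def q_def using ctx.D_orbit_card[OF ctx] by simp
  qed
  have c13: "\<Union>(Orb ` D) = D" unfolding Orb_def Dd using ctx.D_union[OF ctx] .
  have c14: "\<forall>L\<in>D. \<forall>L1\<in>Orb L. \<forall>L2\<in>Orb L. L1 \<noteq> L2 \<longrightarrow> L1 \<inter> L2 = {0}"
    unfolding Orb_def Dd using ctx.D_spread[OF ctx] by blast
  have c1: "{Orb L | L. L \<in> pg_lines \<and> L \<noteq> ellL} =
       (A ` Pts) \<union> {B i P | i P. i \<in> {1..q+1} \<and> P \<in> Pts}
       \<union> (\<Union>i\<in>{1..q+1}. Orb ` C i) \<union> (Orb ` D)"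
  proof
    show "{Orb L | L. L \<in> pg_lines \<and> L \<noteq> ellL} \<subseteq> (A ` Pts) \<union> {B i P | i P. i \<in> {1..q+1} \<and> P \<in> Pts}
       \<union> (\<Union>i\<in>{1..q+1}. Orb ` C i) \<union> (Orb ` D)"
    proof
      fix X assume "X \<in> {Orb L | L. L \<in> pg_lines \<and> L \<noteq> ellL}"
      then obtain L where X: "X = Orb L" and lL0: "L \<in> pg_lines" and ne: "L \<noteq> ellL" by blast
      have lL: "pg_line L" using lL0 unfolding pg_lines_def by simp
      have cl: "(\<exists>p1 p2. \<not> (p1 = 0 \<and> p2 = 0) \<and> L \<in> Aset p1 p2) \<or>
        (\<exists>i\<in>{1..q+1}. \<exists>p1 p2. \<not> (p1 = 0 \<and> p2 = 0) \<and> L \<in> Bset (E4 \<omega> i) (E5 \<omega> i) p1 p2) \<or>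
        (\<exists>i\<in>{1..q+1}. L \<in> Cset (E4 \<omega> i) (E5 \<omega> i)) \<or> L \<in> Dset"
        using classify[OF prim lL ne] unfolding q_def .
      then show "X \<in> (A ` Pts) \<union> {B i P | i P. i \<in> {1..q+1} \<and> P \<in> Pts}
       \<union> (\<Union>i\<in>{1..q+1}. Orb ` C i) \<union> (Orb ` D)"
      proof (elim disjE exE bexE conjE)
        fix p1 p2 assume a: "\<not> (p1 = 0 \<and> p2 = 0)" "L \<in> Aset p1 p2"
        have "X = A (lin1 (mk p1 p2 0 0 0))" unfolding X Orb_def Ad using ctx.A_orbit[OF ctx a] .
        moreover have "lin1 (mk p1 p2 0 0 0) \<in> Pts" unfolding Pts using P_intro[OF a(1)] .
        ultimately show ?thesis by blast
      next
        fix i p1 p2 assume b: "i \<in> {1..q+1}" "\<not> (p1 = 0 \<and> p2 = 0)" "L \<in> Bset (E4 \<omega> i) (E5 \<omega> i) p1 p2"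
        have "X = B i (lin1 (mk p1 p2 0 0 0))" unfolding X Orb_def Bd[OF b(1)] using ctx.B_orbit[OF ctx b(2) Enz b(3)] .
        moreover have "lin1 (mk p1 p2 0 0 0) \<in> Pts" unfolding Pts using P_intro[OF b(2)] .
        ultimately show ?thesis using b(1) by blast
      next
        fix i assume c: "i \<in> {1..q+1}" "L \<in> Cset (E4 \<omega> i) (E5 \<omega> i)"
        then have "L \<in> C i" using Cd by simp
        then show ?thesis using X c(1) by blast
      next
        assume d: "L \<in> Dset"
        then show ?thesis using X Dd by blast
      qed
    qed
  next
    show "(A ` Pts) \<union> {B i P | i P. i \<in> {1..q+1} \<and> P \<in> Pts}
       \<union> (\<Union>i\<in>{1..q+1}. Orb ` C i) \<union> (Orb ` D) \<subseteq> {Orb L | L. L \<in> pg_lines \<and> L \<noteq> ellL}"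
    proof (intro Un_least)
      show "A ` Pts \<subseteq> {Orb L | L. L \<in> pg_lines \<and> L \<noteq> ellL}"
      proof
        fix X assume "X \<in> A ` Pts"
        then obtain P where P: "P \<in> Pts" and X: "X = A P" by blast
        obtain L where L: "L \<in> A P" using Ane[OF P] by blast
        then have "X = Orb L" using c2 P X by simp
        moreover have "L \<in> pg_lines" "L \<noteq> ellL" using L unfolding A_def by auto
        ultimately show "X \<in> {Orb L | L. L \<in> pg_lines \<and> L \<noteq> ellL}" by blast
      qed
      show "{B i P | i P. i \<in> {1..q+1} \<and> P \<in> Pts} \<subseteq> {Orb L | L. L \<in> pg_lines \<and> L \<noteq> ellL}"
      proof
        fix X assume "X \<in> {B i P | i P. i \<in> {1..q+1} \<and> P \<in> Pts}"
        then obtain i P where i: "i \<in> {1..q+1}" and P: "P \<in> Pts" and X: "X = B i P" by blast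
        obtain L where L: "L \<in> B i P" using Bne[OF i P] by blast
        then have "X = Orb L" using c5 i P X by simp
        moreover have "L \<in> pg_lines" "L \<noteq> ellL" using L ellL_sub_pi[where 'a='a] unfolding B_def by auto
        ultimately show "X \<in> {Orb L | L. L \<in> pg_lines \<and> L \<noteq> ellL}" by blast
      qed
      show "(\<Union>i\<in>{1..q+1}. Orb ` C i) \<subseteq> {Orb L | L. L \<in> pg_lines \<and> L \<noteq> ellL}"
      proof
        fix X assume "X \<in> (\<Union>i\<in>{1..q+1}. Orb ` C i)"
        then obtain i L where i: "i \<in> {1..q+1}" and L: "L \<in> C i" and X: "X = Orb L" by blast
        have "L \<in> Cset (E4 \<omega> i) (E5 \<omega> i)" using L Cd[OF i] by simp
        then have "L \<in> pg_lines" "L \<noteq> ellL" using Cset_ne_ell unfolding Cset_def pg_lines_def by auto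
        then show "X \<in> {Orb L | L. L \<in> pg_lines \<and> L \<noteq> ellL}" using X by blast
      qed
      show "Orb ` D \<subseteq> {Orb L | L. L \<in> pg_lines \<and> L \<noteq> ellL}"
      proof
        fix X assume "X \<in> Orb ` D"
        then obtain L where L: "L \<in> D" and X: "X = Orb L" by blast
        have "L \<in> Dset" using L Dd by simp
        then have "L \<in> pg_lines" "L \<noteq> ellL" using Dset_ne_ell unfolding Dset_def pg_lines_def by auto
        then show "X \<in> {Orb L | L. L \<in> pg_lines \<and> L \<noteq> ellL}" using X by blast
      qed
    qed
  qed
  show ?thesis
    using c1 c2 c3 c4 c5 c6 c7 c8 c9 c10 c11 c12 c13 c14 by (intro conjI) assumption+
qed

end
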